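(* Let $X_1,\dots,X_p$ be metrizable spaces and let $B\hookrightarrow A\twoheadrightarrow A/B$ be an exact sequence of Hausdorff topological Abelian groups such that the quotient map $A\to A/B$ admits a continuous local cross-section (a continuous section defined on some neighbourhood of the identity of $A/B$). Then every semi-layered function $f:X_{\le p}\times I^p\to A/B$ has a semi-layered lift $F:X_{\le p}\times I^p\to A$, i.e. $F$ composed with the quotient map equals $f$.
   Context: Let $I=(0,1]$. A continuous dissection over a metrizable space $X$ is a family $\mathcal{F}$ of continuous functions $X\to[0,1]$ containing the constants $0,1$ which is locally finite (each point has a neighbourhood $U$ with $\{\xi|_U:\xi\in\mathcal{F}\}$ finite); it is l-complete if closed under pointwise max, min and pointwise limits of convergent directed families. An $\mathcal{F}$-wedge is $\{(x,t):\xi_1(x)<t\le\xi_2(x)\}$, $\xi_1,\xi_2\in\mathcal{F}$. With $X_{\le i}=X_1\times\cdots\times X_i$, an ascending tuple $(\mathcal{F}_1,\dots,\mathcal{F}_p)$ has $\mathcal{F}_i$ a continuous dissection over $X_{\le i}$; an $(\mathcal{F}_1,\dots,\mathcal{F}_p)$-multiwedge is $\{(x_1,\dots,x_p,t_1,\dots,t_p):(x_1,\dots,x_i,t_i)\in C_i\ \forall i\}$ with $C_i$ an $\mathcal{F}_i$-wedge; minimal means nonempty and minimal under inclusion. Let $\beta:X_{\le p}\times I^p\to X_{\le p}$ be the projection. For a Hausdorff topological Abelian group $A$, a function $f:X_{\le p}\times I^p\to A$ is semi-layered if there is an ascending tuple of l-complete continuous dissections $(\mathcal{F}_1,\dots,\mathcal{F}_p)$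 (said to semi-control $f$) such that for every minimal multiwedge $C$ there is a continuous $f_C:\overline{\beta(C)}\to A$ with $f|_C=f_C\circ\beta|_C$. *)

theory Defs
  imports "HOL-Analysis.Analysis"
begin

text \<open>The spaces X_1,...,X_p are represented by topologies
  X 0, ..., X (p-1) on a common carrier type.  A point of
  X_{<= i} = X_1 x ... x X_i is an extensional function on the index set {..<i}
  (a point of product_topology X {..<i}).  A point of X_{<= p} x I^p is a pair
  (x, t) with x in X_{<= p} and t an extensional function {..<p} -> (0,1].\<close>

definition Xle :: "(nat \<Rightarrow> 'a topology) \<Rightarrow> nat \<Rightarrow> (nat \<Rightarrow> 'a) topology" where
  "Xle X i = product_topology X {..<i}"

definition Ipow :: "nat \<Rightarrow> (nat \<Rightarrow> real) set" where
  "Ipow p = PiE {..<p} (\<lambda>_. {0<..1})"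

definition dom_space :: "(nat \<Rightarrow> 'a topology) \<Rightarrow> nat \<Rightarrow> ((nat \<Rightarrow> 'a) \<times> (nat \<Rightarrow> real)) set" where
  "dom_space X p = topspace (Xle X p) \<times> Ipow p"

definition continuous_dissection :: "'b topology \<Rightarrow> ('b \<Rightarrow> real) set \<Rightarrow> bool" where
  "continuous_dissection Y F \<longleftrightarrow>
     (\<forall>\<xi>\<in>F. continuous_map Y (subtopology euclideanreal {0..1}) \<xi>
             \<and> (\<forall>y. y \<notin> topspace Y \<longrightarrow> \<xi> y = 0)) \<and>
     restrict (\<lambda>_. 0) (topspace Y) \<in> F \<and> restrict (\<lambda>_. 1) (topspace Y) \<in> F \<and>
     (\<forall>y\<in>topspace Y. \<exists>U. openin Y U \<and> y \<in> U \<and> finite ((\<lambda>\<xi>. restrict \<xi> U) ` F))"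

definition up_directed :: "('b \<Rightarrow> real) set \<Rightarrow> bool" where
  "up_directed D \<longleftrightarrow> D \<noteq> {} \<and> (\<forall>\<xi>\<in>D. \<forall>\<eta>\<in>D. \<exists>\<zeta>\<in>D. \<xi> \<le> \<zeta> \<and> \<eta> \<le> \<zeta>)"

definition down_directed :: "('b \<Rightarrow> real) set \<Rightarrow> bool" where
  "down_directed D \<longleftrightarrow> D \<noteq> {} \<and> (\<forall>\<xi>\<in>D. \<forall>\<eta>\<in>D. \<exists>\<zeta>\<in>D. \<zeta> \<le> \<xi> \<and> \<zeta> \<le> \<eta>)"

text \<open>The pointwise limit of such a
  directed family of functions is given by the net indexed by the family itself,
  ordered pointwise; for an upward directed family it is the pointwise supremum,
  for a downward directed family the pointwise infimum.\<close>
definition l_complete :: "('b \<Rightarrow> real) set \<Rightarrow> bool" where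
  "l_complete F \<longleftrightarrow>
     (\<forall>\<xi>\<in>F. \<forall>\<eta>\<in>F. (\<lambda>y. max (\<xi> y) (\<eta> y)) \<in> F \<and> (\<lambda>y. min (\<xi> y) (\<eta> y)) \<in> F) \<and>
     (\<forall>D\<subseteq>F. up_directed D \<and> (\<forall>y. bdd_above ((\<lambda>\<xi>. \<xi> y) ` D))
               \<longrightarrow> (\<lambda>y. SUP \<xi>\<in>D. \<xi> y) \<in> F) \<and>
     (\<forall>D\<subseteq>F. down_directed D \<and> (\<forall>y. bdd_below ((\<lambda>\<xi>. \<xi> y) ` D))
               \<longrightarrow> (\<lambda>y. INF \<xi>\<in>D. \<xi> y) \<in> F)"

text \<open>Ascending tuple (F_1,...,F_p) of l-complete continuous dissections;
  Fs i (i < p) is the dissection over X_{<= i+1}.\<close>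
definition ascending_lcomplete :: "(nat \<Rightarrow> 'a topology) \<Rightarrow> nat \<Rightarrow> (nat \<Rightarrow> ((nat \<Rightarrow> 'a) \<Rightarrow> real) set) \<Rightarrow> bool" where
  "ascending_lcomplete X p Fs \<longleftrightarrow>
     (\<forall>i<p. continuous_dissection (Xle X (Suc i)) (Fs i) \<and> l_complete (Fs i))"

definition multiwedge_of :: "(nat \<Rightarrow> 'a topology) \<Rightarrow> nat \<Rightarrow> (nat \<Rightarrow> (nat \<Rightarrow> 'a) \<Rightarrow> real)
     \<Rightarrow> (nat \<Rightarrow> (nat \<Rightarrow> 'a) \<Rightarrow> real) \<Rightarrow> ((nat \<Rightarrow> 'a) \<times> (nat \<Rightarrow> real)) set" where
  "multiwedge_of X p \<xi>1 \<xi>2 = {(x, t). (x, t) \<in> dom_space X p \<and>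
      (\<forall>i<p. \<xi>1 i (restrict x {..<Suc i}) < t i \<and> t i \<le> \<xi>2 i (restrict x {..<Suc i}))}"

definition is_multiwedge :: "(nat \<Rightarrow> 'a topology) \<Rightarrow> nat \<Rightarrow> (nat \<Rightarrow> ((nat \<Rightarrow> 'a) \<Rightarrow> real) set)
     \<Rightarrow> ((nat \<Rightarrow> 'a) \<times> (nat \<Rightarrow> real)) set \<Rightarrow> bool" where
  "is_multiwedge X p Fs C \<longleftrightarrow>
     (\<exists>\<xi>1 \<xi>2. (\<forall>i<p. \<xi>1 i \<in> Fs i \<and> \<xi>2 i \<in> Fs i) \<and> C = multiwedge_of X p \<xi>1 \<xi>2)"

definition minimal_multiwedge :: "(nat \<Rightarrow> 'a topology) \<Rightarrow> nat \<Rightarrow> (nat \<Rightarrow> ((nat \<Rightarrow> 'a) \<Rightarrow> real) set)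
     \<Rightarrow> ((nat \<Rightarrow> 'a) \<times> (nat \<Rightarrow> real)) set \<Rightarrow> bool" where
  "minimal_multiwedge X p Fs C \<longleftrightarrow> is_multiwedge X p Fs C \<and> C \<noteq> {} \<and>
     (\<forall>C'. is_multiwedge X p Fs C' \<and> C' \<noteq> {} \<and> C' \<subseteq> C \<longrightarrow> C' = C)"

definition semi_controls :: "(nat \<Rightarrow> 'a topology) \<Rightarrow> nat \<Rightarrow> (nat \<Rightarrow> ((nat \<Rightarrow> 'a) \<Rightarrow> real) set)
     \<Rightarrow> ((nat \<Rightarrow> 'a) \<times> (nat \<Rightarrow> real) \<Rightarrow> 'g::topological_space) \<Rightarrow> bool" where
  "semi_controls X p Fs f \<longleftrightarrow> ascending_lcomplete X p Fs \<and>
     (\<forall>C. minimal_multiwedge X p Fs C \<longrightarrow>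
        (\<exists>fC. continuous_map (subtopology (Xle X p) ((Xle X p) closure_of (fst ` C))) euclidean fC
              \<and> (\<forall>z\<in>C. f z = fC (fst z))))"

definition semi_layered :: "(nat \<Rightarrow> 'a topology) \<Rightarrow> nat
     \<Rightarrow> ((nat \<Rightarrow> 'a) \<times> (nat \<Rightarrow> real) \<Rightarrow> 'g::topological_space) \<Rightarrow> bool" where
  "semi_layered X p f \<longleftrightarrow> (\<exists>Fs. semi_controls X p Fs f)"

end

theory Submission
  imports Defs
begin

context Metric_space
begin

lemma lipschitz_cont_real:
  assumes "K \<ge> 0" and "\<And>x y. x \<in> M \<Longrightarrow> y \<in> M \<Longrightarrow> \<bar>f x - f y\<bar> \<le> K * d x y"
  shows "continuous_map mtopology euclideanreal f"
  unfolding continuous_map_from_metric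
proof (intro conjI ballI allI impI)
  show "f \<in> M \<rightarrow> topspace euclideanreal" by simp
  fix a U assume a: "a \<in> M" and U: "openin euclideanreal U \<and> f a \<in> U"
  then obtain e where e: "e > 0" "ball (f a) e \<subseteq> U"
    by (meson open_contains_ball open_openin)
  show "\<exists>r>0. \<forall>x. x \<in> M \<and> d a x < r \<longrightarrow> f x \<in> U"
  proof (intro exI[of _ "e / (K+1)"] conjI allI impI)
    show "e / (K+1) > 0" using e assms(1) by simp
    fix x assume x: "x \<in> M \<and> d a x < e / (K+1)"
    have "\<bar>f a - f x\<bar> \<le> K * d a x" using assms(2) a x by blast
    also have "\<dots> \<le> (K+1) * d a x" using nonneg[of a x] by (simp add: mult_right_mono)
    also have "\<dots> < e" using x assms(1) by (simp add: field_simps)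
    finally show "f x \<in> U" using e by (auto simp: dist_real_def)
  qed
qed

lemma sep_centers:
  assumes Oc: "\<And>x. x \<in> M \<Longrightarrow> openin mtopology (Oc x) \<and> x \<in> Oc x"
  obtains Cn :: "nat \<Rightarrow> 'a set" and idx :: "'a \<Rightarrow> 'a" where
    "\<And>n. Cn n \<subseteq> M"
    "\<And>n c y. c \<in> Cn n \<Longrightarrow> y \<in> M \<Longrightarrow> d c y < 5*(1/2)^n \<Longrightarrow> y \<in> Oc (idx c)"
    "\<And>n c c'. c \<in> Cn n \<Longrightarrow> c' \<in> Cn n \<Longrightarrow> d c c' < 5*(1/2)^n \<Longrightarrow> idx c = idx c'"
    "\<And>y. y \<in> M \<Longrightarrow> \<exists>n. y \<in> Cn n"
    "\<And>n c. c \<in> Cn n \<Longrightarrow> idx c \<in> M"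
proof -
  obtain r :: "'a rel" where r: "well_order_on M r" using well_order_on by blast
  define s where "s = r - Id"
  have wfs: "wf s" using r by (simp add: well_order_on_def s_def)
  have tot: "total_on M r" using r by (simp add: well_order_on_def linear_order_on_def)
  have ex: "\<exists>\<alpha>. \<alpha> \<in> M \<and> y \<in> Oc \<alpha> \<and> (\<forall>\<beta>\<in>M. y \<in> Oc \<beta> \<longrightarrow> (\<beta>,\<alpha>) \<notin> s)" if y: "y \<in> M" for y
  proof -
    have "y \<in> {\<alpha>\<in>M. y \<in> Oc \<alpha>}" using Oc y by auto
    then show ?thesis
      by (rule wfE_min[OF wfs]) blast
  qed
  define idx where "idx y = (SOME \<alpha>. \<alpha> \<in> M \<and> y \<in> Oc \<alpha> \<and> (\<forall>\<beta>\<in>M. y \<in> Oc \<beta> \<longrightarrow> (\<beta>,\<alpha>) \<notin> s))" for y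
  have idx: "idx y \<in> M \<and> y \<in> Oc (idx y) \<and> (\<forall>\<beta>\<in>M. y \<in> Oc \<beta> \<longrightarrow> (\<beta>, idx y) \<notin> s)" if "y \<in> M" for y
    unfolding idx_def by (rule someI_ex[OF ex[OF that]])
  define Cn where "Cn n = {c\<in>M. \<forall>y\<in>M. d c y < 5*(1/2)^n \<longrightarrow> y \<in> Oc (idx c)}" for n :: nat
  show thesis
  proof (rule that[of Cn idx])
    show "Cn n \<subseteq> M" for n unfolding Cn_def by auto
    show "y \<in> Oc (idx c)" if "c \<in> Cn n" "y \<in> M" "d c y < 5*(1/2)^n" for n c y
      using that unfolding Cn_def by auto
  next
    fix n c c' assume c: "c \<in> Cn n" and c': "c' \<in> Cn n" and dcc: "d c c' < 5*(1/2)^n"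
    have cM: "c \<in> M" and c'M: "c' \<in> M" using c c' unfolding Cn_def by auto
    show "idx c = idx c'"
    proof (rule ccontr)
      assume ne: "idx c \<noteq> idx c'"
      have "(idx c, idx c') \<in> r \<or> (idx c', idx c) \<in> r"
        using tot ne idx[OF cM] idx[OF c'M] unfolding total_on_def by blast
      then have "(idx c, idx c') \<in> s \<or> (idx c', idx c) \<in> s" using ne by (auto simp: s_def)
      moreover have "c' \<in> Oc (idx c)" using c c'M dcc unfolding Cn_def by auto
      moreover have "c \<in> Oc (idx c')" using c' cM dcc commute[of c c'] unfolding Cn_def by auto
      ultimately show False using idx[OF cM] idx[OF c'M] by blast
    qed
  next
    fix y assume y: "y \<in> M"
    have "openin mtopology (Oc (idx y))" "y \<in> Oc (idx y)" using Oc idx[OF y] by auto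
    then obtain e where e: "e > 0" "mball y e \<subseteq> Oc (idx y)"
      by (meson openin_mtopology)
    obtain n where n: "(1/2::real)^n < e/5" using real_arch_pow_inv[of "e/5" "1/2"] e by auto
    have "y \<in> Cn n" unfolding Cn_def using y e n by (auto simp: subset_iff)
    then show "\<exists>n. y \<in> Cn n" by blast
  next
    fix n c assume "c \<in> Cn n"
    then show "idx c \<in> M" using idx unfolding Cn_def by blast
  qed
qed

end

lemma SUP_diff_bound:
  fixes f g :: "'c \<Rightarrow> real"
  assumes "S \<noteq> {}" "\<And>c. c \<in> S \<Longrightarrow> 0 \<le> f c \<and> f c \<le> 1" "\<And>c. c \<in> S \<Longrightarrow> 0 \<le> g c \<and> g c \<le> 1"
    and "\<And>c. c \<in> S \<Longrightarrow> f c \<le> g c + K"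
  shows "(SUP c\<in>S. f c) \<le> (SUP c\<in>S. g c) + K"
proof -
  have bg: "bdd_above (g ` S)" using assms(3) by (auto intro: bdd_aboveI[of _ 1])
  show ?thesis
  proof (rule cSUP_least[OF assms(1)])
    fix c assume c: "c \<in> S"
    have "g c \<le> (SUP c\<in>S. g c)" by (rule cSUP_upper[OF c bg])
    then show "f c \<le> (SUP c\<in>S. g c) + K" using assms(4)[OF c] by linarith
  qed
qed

definition hfun :: "nat \<Rightarrow> real \<Rightarrow> real" where
  "hfun n r = max 0 (min 1 (2 - 2 * r * 2^n))"

lemma hfun_range: "0 \<le> hfun n r \<and> hfun n r \<le> 1"
  by (simp add: hfun_def)

lemma hfun_lip: "\<bar>hfun n r - hfun n r'\<bar> \<le> 2 * 2^n * \<bar>r - r'\<bar>"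
proof -
  have e: "(2 - 2 * r * 2^n) - (2 - 2 * r' * 2^n) = (2 * 2^n) * (r' - r)" by (simp add: algebra_simps)
  have "\<bar>(2 - 2 * r * 2^n) - (2 - 2 * r' * 2^n)\<bar> = 2 * 2^n * \<bar>r - r'\<bar>"
    unfolding e abs_mult by simp
  then show ?thesis unfolding hfun_def by linarith
qed

lemma hfun_pos: "hfun n r > 0 \<Longrightarrow> r < (1/2)^n"
proof -
  assume "hfun n r > 0"
  then have "2 - 2 * r * 2^n > 0" unfolding hfun_def by linarith
  then have "r * 2^n < 1" by linarith
  then show ?thesis by (simp add: power_one_over field_simps)
qed

lemma hfun_one: "0 \<le> r \<Longrightarrow> r < (1/2)^(Suc n) \<Longrightarrow> hfun n r = 1"
proof -
  assume "0 \<le> r" "r < (1/2)^(Suc n)"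
  then have "r * 2^(Suc n) < 1" by (simp add: power_one_over field_simps)
  then have "2 - 2 * r * 2^n \<ge> 1" by simp
  then show ?thesis unfolding hfun_def by simp
qed

context Metric_space
begin

lemma chain_exists:
  assumes CnM: "\<And>n. Cn n \<subseteq> M" and cov: "\<And>y. y \<in> M \<Longrightarrow> \<exists>n. y \<in> Cn n"
  obtains \<mu> :: "nat \<Rightarrow> 'a \<Rightarrow> real" where
    "\<And>n. continuous_map mtopology euclideanreal (\<mu> n)"
    "\<And>n y. 0 \<le> \<mu> n y \<and> \<mu> n y \<le> 1"
    "\<And>n y. y \<notin> M \<Longrightarrow> \<mu> n y = 0"
    "\<And>y. y \<in> M \<Longrightarrow> \<mu> 0 y = 1"
    "\<And>n y. \<mu> (Suc n) y \<le> \<mu> n y"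
    "\<And>y. y \<in> M \<Longrightarrow> \<exists>V n. openin mtopology V \<and> y \<in> V \<and> (\<forall>m\<ge>n. \<forall>y'\<in>V. \<mu> m y' = 0)"
    "\<And>n y. y \<in> M \<Longrightarrow> \<mu> (Suc n) y < \<mu> n y \<Longrightarrow> \<exists>c\<in>Cn n. d y c < (1/2)^n"
proof -
  define \<psi> where "\<psi> n y = (if Cn n = {} then 0 else SUP c\<in>Cn n. hfun n (d y c))" for n y
  have \<psi>r: "0 \<le> \<psi> n y \<and> \<psi> n y \<le> 1" for n y
  proof (cases "Cn n = {}")
    case False
    have "hfun n (d y c) \<le> (SUP c\<in>Cn n. hfun n (d y c))" if "c \<in> Cn n" for c
      by (rule cSUP_upper[OF that]) (auto intro: bdd_aboveI[of _ 1] simp: hfun_range)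
    then have "0 \<le> (SUP c\<in>Cn n. hfun n (d y c))"
      using False hfun_range by (meson all_not_in_conv order_trans)
    moreover have "(SUP c\<in>Cn n. hfun n (d y c)) \<le> 1"
      by (rule cSUP_least[OF False]) (simp add: hfun_range)
    ultimately show ?thesis using False by (simp add: \<psi>_def)
  qed (simp add: \<psi>_def)
  have \<psi>lip: "\<psi> n x - \<psi> n y \<le> 2 * 2^n * d x y" if "x \<in> M" "y \<in> M" for n x y
  proof (cases "Cn n = {}")
    case False
    have "(SUP c\<in>Cn n. hfun n (d x c)) \<le> (SUP c\<in>Cn n. hfun n (d y c)) + 2 * 2^n * d x y"
    proof (rule SUP_diff_bound[OF False])
      fix c assume c: "c \<in> Cn n"
      have "\<bar>d x c - d y c\<bar> \<le> d x y" using CnM c that mdist_reverse_triangle[of x c y]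
        by (smt (verit, ccfv_threshold) commute in_mono triangle)
      then have "\<bar>hfun n (d x c) - hfun n (d y c)\<bar> \<le> 2 * 2^n * d x y"
        using hfun_lip[of n "d x c" "d y c"] by (smt (verit) mult_left_mono zero_le_power)
      then show "hfun n (d x c) \<le> hfun n (d y c) + 2 * 2^n * d x y" by linarith
    qed (auto simp: hfun_range)
    then show ?thesis using False by (simp add: \<psi>_def)
  qed (simp add: \<psi>_def)
  have \<psi>cont: "continuous_map mtopology euclideanreal (\<psi> n)" for n
  proof (rule lipschitz_cont_real[of "2 * 2^n"])
    fix x y assume "x \<in> M" "y \<in> M"
    then show "\<bar>\<psi> n x - \<psi> n y\<bar> \<le> 2 * 2^n * d x y"
      using \<psi>lip[of x y] \<psi>lip[of y x] commute[of x y] by (simp add: abs_le_iff)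
  qed simp
  define \<mu> where "\<mu> n y = (if y \<in> M then max 0 (1 - (\<Sum>m<n. \<psi> m y)) else 0)" for n y
  have sum_nn: "0 \<le> (\<Sum>m<n. \<psi> m y)" for n y by (rule sum_nonneg) (use \<psi>r in auto)
  show thesis
  proof (rule that[of \<mu>])
    fix n
    have "continuous_map mtopology euclideanreal (\<lambda>y. max 0 (1 - (\<Sum>m<n. \<psi> m y)))"
      by (intro continuous_intros \<psi>cont) auto
    then show "continuous_map mtopology euclideanreal (\<mu> n)"
      by (rule continuous_map_eq) (simp add: \<mu>_def)
  next
    fix n y show "0 \<le> \<mu> n y \<and> \<mu> n y \<le> 1" using sum_nn by (simp add: \<mu>_def)
  next
    fix n y assume "y \<notin> M" then show "\<mu> n y = 0" by (simp add: \<mu>_def)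
  next
    fix y assume "y \<in> M" then show "\<mu> 0 y = 1" by (simp add: \<mu>_def)
  next
    fix n y show "\<mu> (Suc n) y \<le> \<mu> n y" using \<psi>r[of n y] by (auto simp: \<mu>_def)
  next
    fix y assume y: "y \<in> M"
    obtain n where n: "y \<in> Cn n" using cov y by blast
    show "\<exists>V n. openin mtopology V \<and> y \<in> V \<and> (\<forall>m\<ge>n. \<forall>y'\<in>V. \<mu> m y' = 0)"
    proof (intro exI conjI ballI allI impI)
      show "openin mtopology (mball y ((1/2)^(Suc n)))" by simp
      show "y \<in> mball y ((1/2)^(Suc n))" using y by simp
      fix m y' assume m: "Suc n \<le> m" and y': "y' \<in> mball y ((1/2)^(Suc n))"
      have y'M: "y' \<in> M" using y' by simp
      have "hfun n (d y' y) = 1" using y' by (intro hfun_one) (auto simp: commute)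
      moreover have "hfun n (d y' y) \<le> \<psi> n y'"
        unfolding \<psi>_def using n
        by (auto intro!: cSUP_upper bdd_aboveI[of _ 1] simp: hfun_range)
      ultimately have "1 \<le> \<psi> n y'" by simp
      moreover have "\<psi> n y' \<le> (\<Sum>k<m. \<psi> k y')"
        by (rule member_le_sum) (use m \<psi>r in auto)
      ultimately show "\<mu> m y' = 0" by (simp add: \<mu>_def y'M)
    qed
  next
    fix n y assume y: "y \<in> M" and lt: "\<mu> (Suc n) y < \<mu> n y"
    have "\<psi> n y \<noteq> 0"
    proof
      assume "\<psi> n y = 0"
      then have "\<mu> (Suc n) y = \<mu> n y" by (simp add: \<mu>_def)
      then show False using lt by simp
    qed
    then have "\<psi> n y > 0" using \<psi>r[of n y] by simp
    then have ne: "Cn n \<noteq> {}" and "0 < (SUP c\<in>Cn n. hfun n (d y c))" by (auto simp: \<psi>_def split: if_splits)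
    then obtain c where "c \<in> Cn n" "0 < hfun n (d y c)"
      by (subst (asm) less_cSUP_iff) (auto intro: bdd_aboveI[of _ 1] simp: hfun_range)
    then show "\<exists>c\<in>Cn n. d y c < (1/2)^n" using hfun_pos by blast
  qed
qed

end

lemma cont_Max:
  assumes "finite A" "A \<noteq> {}" "\<And>a. a \<in> A \<Longrightarrow> continuous_map Z euclideanreal (f a)"
  shows "continuous_map Z euclideanreal (\<lambda>y. Max ((\<lambda>a. f a y) ` A))"
  using assms
proof (induction A rule: finite_ne_induct)
  case (singleton x) then show ?case by simp
next
  case (insert x F)
  have "continuous_map Z euclideanreal (\<lambda>y. max (f x y) (Max ((\<lambda>a. f a y) ` F)))"
    using insert by (intro continuous_intros) auto
  then show ?case using insert by (simp add: Max_insert)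
qed

lemma cont_Min:
  assumes "finite A" "A \<noteq> {}" "\<And>a. a \<in> A \<Longrightarrow> continuous_map Z euclideanreal (f a)"
  shows "continuous_map Z euclideanreal (\<lambda>y. Min ((\<lambda>a. f a y) ` A))"
  using assms
proof (induction A rule: finite_ne_induct)
  case (singleton x) then show ?case by simp
next
  case (insert x F)
  have "continuous_map Z euclideanreal (\<lambda>y. min (f x y) (Min ((\<lambda>a. f a y) ` F)))"
    using insert by (intro continuous_intros) auto
  then show ?case using insert by (simp add: Min_insert)
qed

definition mm :: "('b \<Rightarrow> real) set set \<Rightarrow> 'b \<Rightarrow> real" where
  "mm T y = Max ((\<lambda>S. Min ((\<lambda>\<phi>. \<phi> y) ` S)) ` T)"

definition admT :: "('b \<Rightarrow> real) set \<Rightarrow> ('b \<Rightarrow> real) set set \<Rightarrow> bool" where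
  "admT G T \<longleftrightarrow> T \<noteq> {} \<and> (\<forall>S\<in>T. S \<noteq> {} \<and> S \<subseteq> G)"

definition latt :: "('b \<Rightarrow> real) set \<Rightarrow> ('b \<Rightarrow> real) set" where
  "latt G = mm ` {T. admT G T}"

lemma admT_finite: "finite G \<Longrightarrow> admT G T \<Longrightarrow> finite T \<and> (\<forall>S\<in>T. finite S)"
proof -
  assume G: "finite G" and a: "admT G T"
  have "T \<subseteq> Pow G" using a by (auto simp: admT_def)
  then have "finite T" using G by (simp add: finite_subset)
  moreover have "\<forall>S\<in>T. finite S" using a G by (auto simp: admT_def intro: finite_subset)
  ultimately show ?thesis by blast
qed

lemma mm_ge:
  assumes "finite G" "admT G T"
  shows "x \<le> mm T y \<longleftrightarrow> (\<exists>S\<in>T. \<forall>\<phi>\<in>S. x \<le> \<phi> y)"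
proof -
  have fT: "finite T" and fS: "\<And>S. S \<in> T \<Longrightarrow> finite S" using admT_finite[OF assms] by auto
  have ne: "T \<noteq> {}" "\<And>S. S \<in> T \<Longrightarrow> S \<noteq> {}" using assms(2) by (auto simp: admT_def)
  show ?thesis unfolding mm_def
    using fT fS ne by (simp add: Max_ge_iff Min_ge_iff)
qed

lemma eq_by_thresholds:
  fixes a b :: real
  assumes "\<And>x. x \<le> a \<longleftrightarrow> x \<le> b" shows "a = b"
  using assms[of a] assms[of b] by linarith

lemma latt_finite: "finite G \<Longrightarrow> finite (latt G)"
proof -
  assume G: "finite G"
  have "{T. admT G T} \<subseteq> Pow (Pow G)" by (auto simp: admT_def)
  then have "finite {T. admT G T}" using G by (meson finite_Pow_iff finite_subset)
  then show ?thesis unfolding latt_def by simp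
qed

lemma latt_base: "finite G \<Longrightarrow> g \<in> G \<Longrightarrow> g \<in> latt G"
proof -
  assume G: "finite G" and g: "g \<in> G"
  have a: "admT G {{g}}" using g by (simp add: admT_def)
  have "mm {{g}} = g" by (rule ext) (simp add: mm_def)
  then show ?thesis using a unfolding latt_def by (metis image_eqI mem_Collect_eq)
qed

lemma latt_max:
  assumes G: "finite G" and h1: "h1 \<in> latt G" and h2: "h2 \<in> latt G"
  shows "(\<lambda>y. max (h1 y) (h2 y)) \<in> latt G"
proof -
  obtain T1 T2 where a1: "admT G T1" "h1 = mm T1" and a2: "admT G T2" "h2 = mm T2"
    using h1 h2 unfolding latt_def by auto
  have a: "admT G (T1 \<union> T2)" using a1 a2 by (auto simp: admT_def)
  have "mm (T1 \<union> T2) = (\<lambda>y. max (h1 y) (h2 y))"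
  proof (rule ext, rule eq_by_thresholds)
    fix y x show "x \<le> mm (T1 \<union> T2) y \<longleftrightarrow> x \<le> max (h1 y) (h2 y)"
      unfolding mm_ge[OF G a, of x y] a1(2) a2(2) le_max_iff_disj mm_ge[OF G a1(1), of x y] mm_ge[OF G a2(1), of x y]
      by blast
  qed
  then show ?thesis using a unfolding latt_def by (metis image_eqI mem_Collect_eq)
qed

lemma admT_union: "admT G T1 \<Longrightarrow> admT G T2 \<Longrightarrow> admT G {S1 \<union> S2 | S1 S2. S1 \<in> T1 \<and> S2 \<in> T2}"
  unfolding admT_def by blast

lemma latt_min:
  assumes G: "finite G" and h1: "h1 \<in> latt G" and h2: "h2 \<in> latt G"
  shows "(\<lambda>y. min (h1 y) (h2 y)) \<in> latt G"
proof -
  obtain T1 T2 where a1: "admT G T1" "h1 = mm T1" and a2: "admT G T2" "h2 = mm T2"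
    using h1 h2 unfolding latt_def by auto
  define T3 where "T3 = {S1 \<union> S2 | S1 S2. S1 \<in> T1 \<and> S2 \<in> T2}"
  have a: "admT G T3" unfolding T3_def by (rule admT_union[OF a1(1) a2(1)])
  have "mm T3 = (\<lambda>y. min (h1 y) (h2 y))"
  proof (rule ext, rule eq_by_thresholds)
    fix y x
    have "x \<le> mm T3 y \<longleftrightarrow> (\<exists>S\<in>T3. \<forall>\<phi>\<in>S. x \<le> \<phi> y)" by (rule mm_ge[OF G a])
    also have "\<dots> \<longleftrightarrow> (\<exists>S1\<in>T1. \<forall>\<phi>\<in>S1. x \<le> \<phi> y) \<and> (\<exists>S2\<in>T2. \<forall>\<phi>\<in>S2. x \<le> \<phi> y)"
    proof
      assume "\<exists>S\<in>T3. \<forall>\<phi>\<in>S. x \<le> \<phi> y"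
      then obtain S1 S2 where "S1 \<in> T1" "S2 \<in> T2" "\<forall>\<phi>\<in>S1 \<union> S2. x \<le> \<phi> y" unfolding T3_def by blast
      then show "(\<exists>S1\<in>T1. \<forall>\<phi>\<in>S1. x \<le> \<phi> y) \<and> (\<exists>S2\<in>T2. \<forall>\<phi>\<in>S2. x \<le> \<phi> y)" by blast
    next
      assume "(\<exists>S1\<in>T1. \<forall>\<phi>\<in>S1. x \<le> \<phi> y) \<and> (\<exists>S2\<in>T2. \<forall>\<phi>\<in>S2. x \<le> \<phi> y)"
      then obtain S1 S2 where "S1 \<in> T1" "S2 \<in> T2" "\<forall>\<phi>\<in>S1 \<union> S2. x \<le> \<phi> y" by blast
      moreover have "S1 \<union> S2 \<in> T3" using calculation unfolding T3_def by blast
      ultimately show "\<exists>S\<in>T3. \<forall>\<phi>\<in>S. x \<le> \<phi> y" by blast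
    qed
    also have "\<dots> \<longleftrightarrow> x \<le> min (h1 y) (h2 y)"
      unfolding a1(2) a2(2) min.bounded_iff mm_ge[OF G a1(1), of x y] mm_ge[OF G a2(1), of x y] ..
    finally show "x \<le> mm T3 y \<longleftrightarrow> x \<le> min (h1 y) (h2 y)" .
  qed
  then show ?thesis using a unfolding latt_def by (metis image_eqI mem_Collect_eq)
qed

lemma latt_cont:
  assumes G: "finite G" and h: "h \<in> latt G" and c: "\<And>g. g \<in> G \<Longrightarrow> continuous_map Z euclideanreal g"
  shows "continuous_map Z euclideanreal h"
proof -
  obtain T where a: "admT G T" "h = mm T" using h unfolding latt_def by auto
  have fT: "finite T" and fS: "\<And>S. S \<in> T \<Longrightarrow> finite S" using admT_finite[OF G a(1)] by auto
  show ?thesis unfolding a(2) mm_def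
    using a(1) fT fS c unfolding admT_def
    by (intro cont_Max cont_Min) auto
qed

lemma latt_val:
  assumes G: "finite G" and h: "h \<in> latt G"
  shows "\<exists>g\<in>G. h y = g y"
proof -
  obtain T where a: "admT G T" "h = mm T" using h unfolding latt_def by auto
  have fT: "finite T" and fS: "\<And>S. S \<in> T \<Longrightarrow> finite S" using admT_finite[OF G a(1)] by auto
  have neT: "T \<noteq> {}" and neS: "\<And>S. S \<in> T \<Longrightarrow> S \<noteq> {} \<and> S \<subseteq> G" using a(1) by (auto simp: admT_def)
  have "mm T y \<in> (\<lambda>S. Min ((\<lambda>\<phi>. \<phi> y) ` S)) ` T" unfolding mm_def
    using fT neT by (intro Max_in) auto
  then obtain S where S: "S \<in> T" "mm T y = Min ((\<lambda>\<phi>. \<phi> y) ` S)" by auto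
  have "Min ((\<lambda>\<phi>. \<phi> y) ` S) \<in> (\<lambda>\<phi>. \<phi> y) ` S" using fS[OF S(1)] neS[OF S(1)] by (intro Min_in) auto
  then show ?thesis using S neS[OF S(1)] a(2) by auto
qed

lemma directed_finite_bound:
  assumes "up_directed D" "finite E" "E \<subseteq> D"
  shows "\<exists>\<zeta>\<in>D. \<forall>\<xi>\<in>E. \<xi> \<le> \<zeta>"
  using assms(2,3)
proof (induction E rule: finite_induct)
  case empty then show ?case using assms(1) by (auto simp: up_directed_def)
next
  case (insert x F)
  then obtain \<zeta> where z: "\<zeta> \<in> D" "\<forall>\<xi>\<in>F. \<xi> \<le> \<zeta>" by auto
  obtain \<zeta>' where "\<zeta>' \<in> D" "x \<le> \<zeta>'" "\<zeta> \<le> \<zeta>'" using assms(1) insert z unfolding up_directed_def by blast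
  then show ?case using z order_trans by blast
qed

lemma directed_finite_bound_down:
  assumes "down_directed D" "finite E" "E \<subseteq> D"
  shows "\<exists>\<zeta>\<in>D. \<forall>\<xi>\<in>E. \<zeta> \<le> \<xi>"
  using assms(2,3)
proof (induction E rule: finite_induct)
  case empty then show ?case using assms(1) by (auto simp: down_directed_def)
next
  case (insert x F)
  then obtain \<zeta> where z: "\<zeta> \<in> D" "\<forall>\<xi>\<in>F. \<zeta> \<le> \<xi>" by auto
  obtain \<zeta>' where "\<zeta>' \<in> D" "\<zeta>' \<le> x" "\<zeta>' \<le> \<zeta>" using assms(1) insert z unfolding down_directed_def by blast
  then show ?case using z order_trans by blast
qed

lemma cd_cont: "continuous_dissection Y F \<Longrightarrow> \<xi> \<in> F \<Longrightarrow> continuous_map Y euclideanreal \<xi>"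
  unfolding continuous_dissection_def continuous_map_in_subtopology by blast

lemma cd_range: "continuous_dissection Y F \<Longrightarrow> \<xi> \<in> F \<Longrightarrow> y \<in> topspace Y \<Longrightarrow> 0 \<le> \<xi> y \<and> \<xi> y \<le> 1"
  unfolding continuous_dissection_def continuous_map_in_subtopology by fastforce

lemma cd_ext: "continuous_dissection Y F \<Longrightarrow> \<xi> \<in> F \<Longrightarrow> y \<notin> topspace Y \<Longrightarrow> \<xi> y = 0"
  unfolding continuous_dissection_def by blast

lemma cd_range_all: "continuous_dissection Y F \<Longrightarrow> \<xi> \<in> F \<Longrightarrow> 0 \<le> \<xi> y \<and> \<xi> y \<le> 1"
  using cd_range cd_ext by (metis order_refl zero_le_one)

lemma cd_locfin: "continuous_dissection Y F \<Longrightarrow> x \<in> topspace Y \<Longrightarrow>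
   \<exists>U. openin Y U \<and> x \<in> U \<and> finite ((\<lambda>\<xi>. restrict \<xi> U) ` F)"
  unfolding continuous_dissection_def by blast

lemma restrict_finite_shrink:
  assumes "finite ((\<lambda>\<xi>. restrict \<xi> U) ` F)" "V \<subseteq> U"
  shows "finite ((\<lambda>\<xi>. restrict \<xi> V) ` F)"
proof -
  have "(\<lambda>\<xi>. restrict \<xi> V) ` F = (\<lambda>k. restrict k V) ` ((\<lambda>\<xi>. restrict \<xi> U) ` F)"
    using assms(2) by (auto simp: image_image restrict_def fun_eq_iff intro!: image_cong) 
  then show ?thesis using assms(1) by simp
qed

lemma lattice_closure:
  assumes F1: "continuous_dissection Y F1" and F2: "continuous_dissection Y F2"
  obtains L where "continuous_dissection Y L" "l_complete L" "F1 \<subseteq> L" "F2 \<subseteq> L"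
proof -
  have "\<exists>V. openin Y V \<and> x \<in> V \<and> finite ((\<lambda>\<xi>. restrict \<xi> V) ` F1) \<and> finite ((\<lambda>\<xi>. restrict \<xi> V) ` F2)"
    if x: "x \<in> topspace Y" for x
  proof -
    obtain U1 where U1: "openin Y U1" "x \<in> U1" "finite ((\<lambda>\<xi>. restrict \<xi> U1) ` F1)" using cd_locfin[OF F1 x] by blast
    obtain U2 where U2: "openin Y U2" "x \<in> U2" "finite ((\<lambda>\<xi>. restrict \<xi> U2) ` F2)" using cd_locfin[OF F2 x] by blast
    show ?thesis
      by (rule exI[of _ "U1 \<inter> U2"])
         (use U1 U2 restrict_finite_shrink[OF U1(3), of "U1 \<inter> U2"] restrict_finite_shrink[OF U2(3), of "U1 \<inter> U2"] in auto)
  qed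
  then have "\<forall>x\<in>topspace Y. \<exists>V. openin Y V \<and> x \<in> V \<and> finite ((\<lambda>\<xi>. restrict \<xi> V) ` F1) \<and> finite ((\<lambda>\<xi>. restrict \<xi> V) ` F2)"
    by blast
  then have "\<exists>N. \<forall>x\<in>topspace Y. openin Y (N x) \<and> x \<in> N x \<and>
      finite ((\<lambda>\<xi>. restrict \<xi> (N x)) ` F1) \<and> finite ((\<lambda>\<xi>. restrict \<xi> (N x)) ` F2)"
    by (rule bchoice)
  then obtain N where N0: "\<forall>x\<in>topspace Y. openin Y (N x) \<and> x \<in> N x \<and>
      finite ((\<lambda>\<xi>. restrict \<xi> (N x)) ` F1) \<and> finite ((\<lambda>\<xi>. restrict \<xi> (N x)) ` F2)"
    ..
  have N: "openin Y (N x) \<and> x \<in> N x \<and>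
      finite ((\<lambda>\<xi>. restrict \<xi> (N x)) ` F1) \<and> finite ((\<lambda>\<xi>. restrict \<xi> (N x)) ` F2)" if "x \<in> topspace Y" for x
    using N0 that by blast
  define G where "G x = (\<lambda>\<xi>. restrict \<xi> (N x)) ` (F1 \<union> F2)" for x
  have Gfin: "finite (G x)" if "x \<in> topspace Y" for x
    using N[OF that] unfolding G_def by (simp add: image_Un)
  have Gcont: "continuous_map (subtopology Y (N x)) euclideanreal g" if gG: "g \<in> G x" for x g
  proof -
    obtain \<xi> where \<xi>: "\<xi> \<in> F1 \<union> F2" "g = restrict \<xi> (N x)" using gG unfolding G_def by blast
    have "continuous_map Y euclideanreal \<xi>" using \<xi>(1) cd_cont F1 F2 by blast
    then have "continuous_map (subtopology Y (N x)) euclideanreal \<xi>" by (rule continuous_map_from_subtopology)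
    then show ?thesis by (rule continuous_map_eq) (simp add: \<xi>(2))
  qed
  have Gval: "0 \<le> g y \<and> g y \<le> 1" if gG: "g \<in> G x" "y \<in> N x" "x \<in> topspace Y" for x g y
  proof -
    obtain \<xi> where \<xi>: "\<xi> \<in> F1 \<union> F2" "g = restrict \<xi> (N x)" using gG(1) unfolding G_def by blast
    have "g y = \<xi> y" using \<xi>(2) gG(2) by simp
    moreover have "0 \<le> \<xi> y \<and> \<xi> y \<le> 1"
    proof (cases "\<xi> \<in> F1")
      case True then show ?thesis by (rule cd_range_all[OF F1])
    next
      case False then have "\<xi> \<in> F2" using \<xi>(1) by blast
      then show ?thesis by (rule cd_range_all[OF F2])
    qed
    ultimately show ?thesis by simp
  qed
  define L where "L = {h. (\<forall>y. y \<notin> topspace Y \<longrightarrow> h y = 0) \<and>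
      (\<forall>x\<in>topspace Y. \<exists>k\<in>latt (G x). \<forall>y\<in>N x. h y = k y)}"
  have sub: "F1 \<union> F2 \<subseteq> L"
  proof
    fix \<xi> assume \<xi>: "\<xi> \<in> F1 \<union> F2"
    have "restrict \<xi> (N x) \<in> latt (G x)" if "x \<in> topspace Y" for x
      using \<xi> by (intro latt_base Gfin that) (auto simp: G_def)
    moreover have "\<forall>y. y \<notin> topspace Y \<longrightarrow> \<xi> y = 0"
    proof (cases "\<xi> \<in> F1")
      case True then show ?thesis using cd_ext[OF F1] by blast
    next
      case False then have "\<xi> \<in> F2" using \<xi> by blast
      then show ?thesis using cd_ext[OF F2] by blast
    qed
    moreover have "\<forall>y\<in>N x. \<xi> y = restrict \<xi> (N x) y" for x by simp
    ultimately show "\<xi> \<in> L" unfolding L_def by blast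
  qed
  have Lmax: "(\<lambda>y. max (h1 y) (h2 y)) \<in> L" if "h1 \<in> L" "h2 \<in> L" for h1 h2
  proof -
    have "\<exists>k\<in>latt (G x). \<forall>y\<in>N x. max (h1 y) (h2 y) = k y" if x: "x \<in> topspace Y" for x
    proof -
      obtain k1 k2 where "k1 \<in> latt (G x)" "\<forall>y\<in>N x. h1 y = k1 y" "k2 \<in> latt (G x)" "\<forall>y\<in>N x. h2 y = k2 y"
        using \<open>h1 \<in> L\<close> \<open>h2 \<in> L\<close> x unfolding L_def by blast
      moreover have "(\<lambda>y. max (k1 y) (k2 y)) \<in> latt (G x)" using latt_max[OF Gfin[OF x]] calculation by blast
      ultimately show ?thesis by (intro bexI[of _ "\<lambda>y. max (k1 y) (k2 y)"]) auto
    qed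
    moreover have "\<forall>y. y \<notin> topspace Y \<longrightarrow> max (h1 y) (h2 y) = 0" using that unfolding L_def by simp
    ultimately show ?thesis unfolding L_def by blast
  qed
  have Lmin: "(\<lambda>y. min (h1 y) (h2 y)) \<in> L" if "h1 \<in> L" "h2 \<in> L" for h1 h2
  proof -
    have "\<exists>k\<in>latt (G x). \<forall>y\<in>N x. min (h1 y) (h2 y) = k y" if x: "x \<in> topspace Y" for x
    proof -
      obtain k1 k2 where "k1 \<in> latt (G x)" "\<forall>y\<in>N x. h1 y = k1 y" "k2 \<in> latt (G x)" "\<forall>y\<in>N x. h2 y = k2 y"
        using \<open>h1 \<in> L\<close> \<open>h2 \<in> L\<close> x unfolding L_def by blast
      moreover have "(\<lambda>y. min (k1 y) (k2 y)) \<in> latt (G x)" using latt_min[OF Gfin[OF x]] calculation by blast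
      ultimately show ?thesis by (intro bexI[of _ "\<lambda>y. min (k1 y) (k2 y)"]) auto
    qed
    moreover have "\<forall>y. y \<notin> topspace Y \<longrightarrow> min (h1 y) (h2 y) = 0" using that unfolding L_def by simp
    ultimately show ?thesis unfolding L_def by blast
  qed
  have Lloc: "restrict h (N x) \<in> (\<lambda>k. restrict k (N x)) ` latt (G x)" if hx: "h \<in> L" "x \<in> topspace Y" for h x
  proof -
    obtain k where "k \<in> latt (G x)" "\<forall>y\<in>N x. h y = k y" using hx unfolding L_def by blast
    then show ?thesis by (intro image_eqI[of _ _ k]) (auto simp: restrict_def fun_eq_iff)
  qed
  have Lcont: "continuous_map Y (subtopology euclideanreal {0..1}) h" if h: "h \<in> L" for h
  proof -
    define f where "f x = (SOME k. k \<in> latt (G x) \<and> (\<forall>y\<in>N x. h y = k y))" for x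
    have f: "f x \<in> latt (G x) \<and> (\<forall>y\<in>N x. h y = f x y)" if "x \<in> topspace Y" for x
    proof -
      have "\<exists>k. k \<in> latt (G x) \<and> (\<forall>y\<in>N x. h y = k y)" using h that unfolding L_def by blast
      from someI_ex[OF this] show ?thesis unfolding f_def .
    qed
    have "continuous_map Y euclideanreal h"
    proof (rule pasting_lemma[where I="topspace Y" and T=N and f=f])
      show "openin Y (N i)" if "i \<in> topspace Y" for i using N[OF that] by blast
      show "continuous_map (subtopology Y (N i)) euclideanreal (f i)" if "i \<in> topspace Y" for i
      proof (rule latt_cont[OF Gfin[OF that]])
        show "f i \<in> latt (G i)" using f[OF that] by blast
        show "continuous_map (subtopology Y (N i)) euclideanreal g" if "g \<in> G i" for g
          using Gcont that by blast
      qed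
      show "f i x = f j x" if "i \<in> topspace Y" "j \<in> topspace Y" "x \<in> topspace Y \<inter> N i \<inter> N j" for i j x
      proof -
        have "h x = f i x" using f[OF that(1)] that(3) by blast
        moreover have "h x = f j x" using f[OF that(2)] that(3) by blast
        ultimately show ?thesis by simp
      qed
      show "\<exists>j. j \<in> topspace Y \<and> x \<in> N j \<and> h x = f j x" if "x \<in> topspace Y" for x
      proof -
        have xN: "x \<in> N x" using N[OF that] by blast
        then have "h x = f x x" using f[OF that] by blast
        then show ?thesis using xN that by blast
      qed
    qed
    moreover have "h ` topspace Y \<subseteq> {0..1}"
    proof
      fix v assume "v \<in> h ` topspace Y"
      then obtain y where y: "y \<in> topspace Y" "v = h y" by blast
      have fy: "f y \<in> latt (G y)" using f[OF y(1)] by blast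
      obtain g where g: "g \<in> G y" "f y y = g y" using latt_val[OF Gfin[OF y(1)] fy] by blast
      have yN: "y \<in> N y" using N[OF y(1)] by blast
      have "h y = f y y" using f[OF y(1)] yN by blast
      moreover have "0 \<le> g y \<and> g y \<le> 1" by (rule Gval[OF g(1) yN y(1)])
      ultimately show "v \<in> {0..1}" using g(2) y(2) by simp
    qed
    ultimately show ?thesis by (simp add: continuous_map_in_subtopology image_subset_iff_funcset)
  qed
  show thesis
  proof (rule that[of L])
    show "F1 \<subseteq> L" "F2 \<subseteq> L" using sub by auto
    show "continuous_dissection Y L"
      unfolding continuous_dissection_def
    proof (intro conjI ballI)
      show "continuous_map Y (subtopology euclideanreal {0..1}) h" if "h \<in> L" for h using Lcont that .
      show "\<forall>y. y \<notin> topspace Y \<longrightarrow> h y = 0" if "h \<in> L" for h using that unfolding L_def by blast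
      show "restrict (\<lambda>_. 0) (topspace Y) \<in> L" "restrict (\<lambda>_. 1) (topspace Y) \<in> L"
      proof -
        have "restrict (\<lambda>_. 0) (topspace Y) \<in> F1" "restrict (\<lambda>_. 1) (topspace Y) \<in> F1"
          using F1 unfolding continuous_dissection_def by blast+
        then show "restrict (\<lambda>_. 0) (topspace Y) \<in> L" "restrict (\<lambda>_. 1) (topspace Y) \<in> L" using sub by blast+
      qed
      show "\<exists>U. openin Y U \<and> x \<in> U \<and> finite ((\<lambda>\<xi>. restrict \<xi> U) ` L)" if x: "x \<in> topspace Y" for x
      proof (intro exI conjI)
        show "openin Y (N x)" "x \<in> N x" using N[OF x] by auto
        have "(\<lambda>\<xi>. restrict \<xi> (N x)) ` L \<subseteq> (\<lambda>k. restrict k (N x)) ` latt (G x)" using Lloc x by blast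
        then show "finite ((\<lambda>\<xi>. restrict \<xi> (N x)) ` L)"
          using latt_finite[OF Gfin[OF x]] finite_subset by blast
      qed
    qed
    have key: "\<exists>\<zeta>\<in>D. \<forall>\<xi>\<in>D. \<forall>y\<in>N x. \<xi> y \<le> \<zeta> y"
      if D: "D \<subseteq> L" "up_directed D" and x: "x \<in> topspace Y" for D x
    proof -
      have "(\<lambda>\<xi>. restrict \<xi> (N x)) ` D \<subseteq> (\<lambda>k. restrict k (N x)) ` latt (G x)" using Lloc x D by blast
      then have fin: "finite ((\<lambda>\<xi>. restrict \<xi> (N x)) ` D)"
        using latt_finite[OF Gfin[OF x]] finite_subset by blast
      obtain E where E: "E \<subseteq> D" "finite E" "(\<lambda>\<xi>. restrict \<xi> (N x)) ` D = (\<lambda>\<xi>. restrict \<xi> (N x)) ` E"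
        using finite_subset_image[OF fin order_refl] by blast
      obtain \<zeta> where z: "\<zeta> \<in> D" "\<forall>\<xi>\<in>E. \<xi> \<le> \<zeta>" using directed_finite_bound[OF D(2) E(2) E(1)] by blast
      have "\<forall>\<xi>\<in>D. \<forall>y\<in>N x. \<xi> y \<le> \<zeta> y"
      proof (intro ballI)
        fix \<xi> y assume \<xi>: "\<xi> \<in> D" and y: "y \<in> N x"
        have "restrict \<xi> (N x) \<in> (\<lambda>\<xi>. restrict \<xi> (N x)) ` E" using E(3) \<xi> by blast
        then obtain \<xi>' where \<xi>': "\<xi>' \<in> E" "restrict \<xi> (N x) = restrict \<xi>' (N x)" by blast
        have "restrict \<xi> (N x) y = restrict \<xi>' (N x) y" using \<xi>'(2) by simp
        then have "\<xi> y = \<xi>' y" using y by simp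
        moreover have "\<xi>' \<le> \<zeta>" using z \<xi>'(1) by blast
        ultimately have "\<xi> y = \<xi>' y" "\<xi>' \<le> \<zeta>" by auto
        then show "\<xi> y \<le> \<zeta> y" by (simp add: le_fun_def)
      qed
      then show ?thesis using z by blast
    qed
    have keyd: "\<exists>\<zeta>\<in>D. \<forall>\<xi>\<in>D. \<forall>y\<in>N x. \<zeta> y \<le> \<xi> y"
      if D: "D \<subseteq> L" "down_directed D" and x: "x \<in> topspace Y" for D x
    proof -
      have "(\<lambda>\<xi>. restrict \<xi> (N x)) ` D \<subseteq> (\<lambda>k. restrict k (N x)) ` latt (G x)" using Lloc x D by blast
      then have fin: "finite ((\<lambda>\<xi>. restrict \<xi> (N x)) ` D)"
        using latt_finite[OF Gfin[OF x]] finite_subset by blast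
      obtain E where E: "E \<subseteq> D" "finite E" "(\<lambda>\<xi>. restrict \<xi> (N x)) ` D = (\<lambda>\<xi>. restrict \<xi> (N x)) ` E"
        using finite_subset_image[OF fin order_refl] by blast
      obtain \<zeta> where z: "\<zeta> \<in> D" "\<forall>\<xi>\<in>E. \<zeta> \<le> \<xi>" using directed_finite_bound_down[OF D(2) E(2) E(1)] by blast
      have "\<forall>\<xi>\<in>D. \<forall>y\<in>N x. \<zeta> y \<le> \<xi> y"
      proof (intro ballI)
        fix \<xi> y assume \<xi>: "\<xi> \<in> D" and y: "y \<in> N x"
        have "restrict \<xi> (N x) \<in> (\<lambda>\<xi>. restrict \<xi> (N x)) ` E" using E(3) \<xi> by blast
        then obtain \<xi>' where \<xi>': "\<xi>' \<in> E" "restrict \<xi> (N x) = restrict \<xi>' (N x)" by blast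
        have "restrict \<xi> (N x) y = restrict \<xi>' (N x) y" using \<xi>'(2) by simp
        then have "\<xi> y = \<xi>' y" using y by simp
        moreover have "\<zeta> \<le> \<xi>'" using z \<xi>'(1) by blast
        ultimately have "\<xi> y = \<xi>' y" "\<zeta> \<le> \<xi>'" by auto
        then show "\<zeta> y \<le> \<xi> y" by (simp add: le_fun_def)
      qed
      then show ?thesis using z by blast
    qed
    show "l_complete L"
      unfolding l_complete_def
    proof (intro conjI ballI allI impI)
      show "(\<lambda>y. max (\<xi> y) (\<eta> y)) \<in> L" "(\<lambda>y. min (\<xi> y) (\<eta> y)) \<in> L" if "\<xi> \<in> L" "\<eta> \<in> L" for \<xi> \<eta>
        using Lmax Lmin that by auto
    next
      fix D assume D0: "D \<subseteq> L" and D1: "up_directed D \<and> (\<forall>y. bdd_above ((\<lambda>\<xi>. \<xi> y) ` D))"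
      then have D: "D \<subseteq> L \<and> up_directed D \<and> (\<forall>y. bdd_above ((\<lambda>\<xi>. \<xi> y) ` D))" by blast
      have Dne: "D \<noteq> {}" using D by (simp add: up_directed_def)
      have ext: "(SUP \<xi>\<in>D. \<xi> y) = 0" if "y \<notin> topspace Y" for y
      proof -
        have "(SUP \<xi>\<in>D. \<xi> y) = (SUP \<xi>\<in>D. (0::real))"
          using D that unfolding L_def by (intro SUP_cong) auto
        then show ?thesis using Dne by simp
      qed
      have "\<exists>k\<in>latt (G x). \<forall>y\<in>N x. (SUP \<xi>\<in>D. \<xi> y) = k y" if x: "x \<in> topspace Y" for x
      proof -
        obtain \<zeta> where z: "\<zeta> \<in> D" "\<forall>\<xi>\<in>D. \<forall>y\<in>N x. \<xi> y \<le> \<zeta> y" using key[OF _ _ x] D by blast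
        obtain k where k: "k \<in> latt (G x)" "\<forall>y\<in>N x. \<zeta> y = k y" using z(1) D x unfolding L_def by blast
        have "(SUP \<xi>\<in>D. \<xi> y) = \<zeta> y" if y: "y \<in> N x" for y
        proof (rule antisym)
          show "(SUP \<xi>\<in>D. \<xi> y) \<le> \<zeta> y" using z y Dne by (intro cSUP_least) auto
          show "\<zeta> y \<le> (SUP \<xi>\<in>D. \<xi> y)" using z(1) D by (intro cSUP_upper) auto
        qed
        then show ?thesis using k by auto
      qed
      then show "(\<lambda>y. SUP \<xi>\<in>D. \<xi> y) \<in> L" using ext unfolding L_def by auto
    next
      fix D assume D0: "D \<subseteq> L" and D1: "down_directed D \<and> (\<forall>y. bdd_below ((\<lambda>\<xi>. \<xi> y) ` D))"
      then have D: "D \<subseteq> L \<and> down_directed D \<and> (\<forall>y. bdd_below ((\<lambda>\<xi>. \<xi> y) ` D))" by blast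
      have Dne: "D \<noteq> {}" using D by (simp add: down_directed_def)
      have ext: "(INF \<xi>\<in>D. \<xi> y) = 0" if "y \<notin> topspace Y" for y
      proof -
        have "(INF \<xi>\<in>D. \<xi> y) = (INF \<xi>\<in>D. (0::real))"
          using D that unfolding L_def by (intro INF_cong) auto
        then show ?thesis using Dne by simp
      qed
      have "\<exists>k\<in>latt (G x). \<forall>y\<in>N x. (INF \<xi>\<in>D. \<xi> y) = k y" if x: "x \<in> topspace Y" for x
      proof -
        obtain \<zeta> where z: "\<zeta> \<in> D" "\<forall>\<xi>\<in>D. \<forall>y\<in>N x. \<zeta> y \<le> \<xi> y" using keyd[OF _ _ x] D by blast
        obtain k where k: "k \<in> latt (G x)" "\<forall>y\<in>N x. \<zeta> y = k y" using z(1) D x unfolding L_def by blast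
        have "(INF \<xi>\<in>D. \<xi> y) = \<zeta> y" if y: "y \<in> N x" for y
        proof (rule antisym)
          show "\<zeta> y \<le> (INF \<xi>\<in>D. \<xi> y)" using z y Dne by (intro cINF_greatest) auto
          show "(INF \<xi>\<in>D. \<xi> y) \<le> \<zeta> y" using z(1) D by (intro cINF_lower) auto
        qed
        then show ?thesis using k by auto
      qed
      then show "(\<lambda>y. INF \<xi>\<in>D. \<xi> y) \<in> L" using ext unfolding L_def by auto
    qed
  qed
qed

lemma topspace_Xle: "topspace (Xle X n) = (\<Pi>\<^sub>E i\<in>{..<n}. topspace (X i))"
  by (simp add: Xle_def)

lemma restrict_in_Xle:
  assumes "x \<in> topspace (Xle X p)" "m \<le> p"
  shows "restrict x {..<m} \<in> topspace (Xle X m)"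
  using assms by (auto simp: topspace_Xle PiE_iff)

lemma cont_restrict_Xle:
  assumes "m \<le> p"
  shows "continuous_map (Xle X p) (Xle X m) (\<lambda>x. restrict x {..<m})"
  unfolding Xle_def continuous_map_componentwise
proof (intro conjI ballI)
  show "(\<lambda>x. restrict x {..<m}) ` topspace (product_topology X {..<p}) \<subseteq> extensional {..<m}" by auto
  fix k assume k: "k \<in> {..<m}"
  then have kp: "k \<in> {..<p}" using assms by auto
  have "continuous_map (product_topology X {..<p}) (X k) (\<lambda>x. x k)"
    by (rule continuous_map_product_projection[OF kp])
  then show "continuous_map (product_topology X {..<p}) (X k) (\<lambda>x. restrict x {..<m} k)"
    using k by simp
qed

lemma mw_mem:
  "(x, t) \<in> multiwedge_of X p \<xi>1 \<xi>2 \<longleftrightarrow> (x, t) \<in> dom_space X p \<and>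
      (\<forall>i<p. \<xi>1 i (restrict x {..<Suc i}) < t i \<and> t i \<le> \<xi>2 i (restrict x {..<Suc i}))"
  by (simp add: multiwedge_of_def)

lemma mw_inter:
  "multiwedge_of X p \<xi>1 \<xi>2 \<inter> multiwedge_of X p \<eta>1 \<eta>2 =
   multiwedge_of X p (\<lambda>i y. max (\<xi>1 i y) (\<eta>1 i y)) (\<lambda>i y. min (\<xi>2 i y) (\<eta>2 i y))"
proof (rule set_eqI)
  fix z :: "(nat \<Rightarrow> 'a) \<times> (nat \<Rightarrow> real)"
  obtain x t where z: "z = (x, t)" by fastforce
  show "z \<in> multiwedge_of X p \<xi>1 \<xi>2 \<inter> multiwedge_of X p \<eta>1 \<eta>2 \<longleftrightarrow>
        z \<in> multiwedge_of X p (\<lambda>i y. max (\<xi>1 i y) (\<eta>1 i y)) (\<lambda>i y. min (\<xi>2 i y) (\<eta>2 i y))"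
    unfolding z Int_iff mw_mem by auto
qed

definition lattice_closed :: "nat \<Rightarrow> (nat \<Rightarrow> ((nat \<Rightarrow> 'a) \<Rightarrow> real) set) \<Rightarrow> bool" where
  "lattice_closed p Fs \<longleftrightarrow> (\<forall>i<p. \<forall>\<xi>\<in>Fs i. \<forall>\<eta>\<in>Fs i. (\<lambda>y. max (\<xi> y) (\<eta> y)) \<in> Fs i \<and> (\<lambda>y. min (\<xi> y) (\<eta> y)) \<in> Fs i)"

lemma lc_maxmin: "\<xi> \<in> F \<Longrightarrow> \<eta> \<in> F \<Longrightarrow> l_complete F \<Longrightarrow> (\<lambda>y. max (\<xi> y) (\<eta> y)) \<in> F \<and> (\<lambda>y. min (\<xi> y) (\<eta> y)) \<in> F"
  unfolding l_complete_def by (elim conjE) (drule bspec, assumption, drule bspec, assumption, assumption)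

lemma asc_lattice_closed: "ascending_lcomplete X p Fs \<Longrightarrow> lattice_closed p Fs"
proof -
  assume a: "ascending_lcomplete X p Fs"
  show ?thesis unfolding lattice_closed_def
  proof (intro allI impI ballI)
    fix i \<xi> \<eta> assume i: "i < p" and xe: "\<xi> \<in> Fs i" "\<eta> \<in> Fs i"
    have "l_complete (Fs i)" using a i unfolding ascending_lcomplete_def by blast
    from xe(1) xe(2) this show "(\<lambda>y. max (\<xi> y) (\<eta> y)) \<in> Fs i \<and> (\<lambda>y. min (\<xi> y) (\<eta> y)) \<in> Fs i"
      by (rule lc_maxmin)
  qed
qed

lemma mw_inter_is:
  assumes lc: "lattice_closed p Fs" and C1: "is_multiwedge X p Fs C1" and C2: "is_multiwedge X p Fs C2"
  shows "is_multiwedge X p Fs (C1 \<inter> C2)"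
proof -
  obtain \<xi>1 \<xi>2 where x: "\<forall>i<p. \<xi>1 i \<in> Fs i \<and> \<xi>2 i \<in> Fs i" "C1 = multiwedge_of X p \<xi>1 \<xi>2"
    using C1 unfolding is_multiwedge_def by blast
  obtain \<eta>1 \<eta>2 where y: "\<forall>i<p. \<eta>1 i \<in> Fs i \<and> \<eta>2 i \<in> Fs i" "C2 = multiwedge_of X p \<eta>1 \<eta>2"
    using C2 unfolding is_multiwedge_def by blast
  have "\<forall>i<p. (\<lambda>y. max (\<xi>1 i y) (\<eta>1 i y)) \<in> Fs i \<and> (\<lambda>y. min (\<xi>2 i y) (\<eta>2 i y)) \<in> Fs i"
    using x(1) y(1) lc unfolding lattice_closed_def by blast
  then show ?thesis unfolding is_multiwedge_def x(2) y(2) mw_inter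
    by (intro exI[of _ "\<lambda>i y. max (\<xi>1 i y) (\<eta>1 i y)"] exI[of _ "\<lambda>i y. min (\<xi>2 i y) (\<eta>2 i y)"]) simp
qed

lemma minimal_absorb:
  assumes lc: "lattice_closed p Fs" and m: "minimal_multiwedge X p Fs C'"
    and C: "is_multiwedge X p Fs C" and z: "z \<in> C'" "z \<in> C"
  shows "C' \<subseteq> C"
proof -
  have "is_multiwedge X p Fs (C' \<inter> C)" using mw_inter_is[OF lc _ C] m unfolding minimal_multiwedge_def by blast
  moreover have "C' \<inter> C \<noteq> {}" using z by blast
  ultimately have "C' \<inter> C = C'" using m unfolding minimal_multiwedge_def by blast
  then show ?thesis by blast
qed

lemma minimal_disjoint:
  assumes lc: "lattice_closed p Fs" and m1: "minimal_multiwedge X p Fs C1" and m2: "minimal_multiwedge X p Fs C2"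
    and z: "z \<in> C1" "z \<in> C2"
  shows "C1 = C2"
proof
  show "C1 \<subseteq> C2" using minimal_absorb[OF lc m1 _ z] m2 unfolding minimal_multiwedge_def by blast
  show "C2 \<subseteq> C1" using minimal_absorb[OF lc m2 _ z(2,1)] m1 unfolding minimal_multiwedge_def by blast
qed

lemma lc_sup: "D \<subseteq> F \<Longrightarrow> up_directed D \<Longrightarrow> (\<forall>y. bdd_above ((\<lambda>\<xi>. \<xi> y) ` D)) \<Longrightarrow> l_complete F
  \<Longrightarrow> (\<lambda>y. SUP \<xi>\<in>D. \<xi> y) \<in> F"
  unfolding l_complete_def by (drule conjunct1[OF conjunct2]) simp

lemma lc_inf: "D \<subseteq> F \<Longrightarrow> down_directed D \<Longrightarrow> (\<forall>y. bdd_below ((\<lambda>\<xi>. \<xi> y) ` D)) \<Longrightarrow> l_complete F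
  \<Longrightarrow> (\<lambda>y. INF \<xi>\<in>D. \<xi> y) \<in> F"
  unfolding l_complete_def by (drule conjunct2[OF conjunct2]) simp

lemma Ipow_mem: "t \<in> Ipow p \<Longrightarrow> i < p \<Longrightarrow> 0 < t i \<and> t i \<le> 1"
  by (auto simp: Ipow_def PiE_iff)

lemma asc_cd: "ascending_lcomplete X p Fs \<Longrightarrow> i < p \<Longrightarrow> continuous_dissection (Xle X (Suc i)) (Fs i)"
  unfolding ascending_lcomplete_def by blast

lemma asc_lc: "ascending_lcomplete X p Fs \<Longrightarrow> i < p \<Longrightarrow> l_complete (Fs i)"
  unfolding ascending_lcomplete_def by blast

lemma cd_zero: "continuous_dissection Y F \<Longrightarrow> restrict (\<lambda>_. 0) (topspace Y) \<in> F"
  unfolding continuous_dissection_def by blast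

lemma cd_one: "continuous_dissection Y F \<Longrightarrow> restrict (\<lambda>_. 1) (topspace Y) \<in> F"
  unfolding continuous_dissection_def by blast

lemma exists_minimal:
  assumes asc: "ascending_lcomplete X p Fs" and z: "(x, t) \<in> dom_space X p"
  shows "\<exists>C. minimal_multiwedge X p Fs C \<and> (x, t) \<in> C"
proof -
  have xT: "x \<in> topspace (Xle X p)" and tI: "t \<in> Ipow p" using z by (auto simp: dom_space_def)
  define xi where "xi i = restrict x {..<Suc i}" for i
  have xiT: "xi i \<in> topspace (Xle X (Suc i))" if "i < p" for i
    unfolding xi_def using restrict_in_Xle[OF xT] that by simp
  define Dl where "Dl i = {\<xi>\<in>Fs i. \<xi> (xi i) < t i}" for i
  define Du where "Du i = {\<xi>\<in>Fs i. t i \<le> \<xi> (xi i)}" for i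
  define a where "a i = (\<lambda>y. SUP \<xi>\<in>Dl i. \<xi> y)" for i
  define b where "b i = (\<lambda>y. INF \<xi>\<in>Du i. \<xi> y)" for i
  have rng: "0 \<le> \<xi> y \<and> \<xi> y \<le> 1" if "i < p" "\<xi> \<in> Fs i" for i \<xi> y
    by (rule cd_range_all[OF asc_cd[OF asc that(1)] that(2)])
  have bddA: "bdd_above ((\<lambda>\<xi>. \<xi> y) ` Dl i)" if "i < p" for i y
    using rng[OF that] unfolding Dl_def by (intro bdd_aboveI[of _ 1]) auto
  have bddB: "bdd_below ((\<lambda>\<xi>. \<xi> y) ` Du i)" if "i < p" for i y
    using rng[OF that] unfolding Du_def by (intro bdd_belowI[of _ 0]) auto
  have Dlne: "restrict (\<lambda>_. 0) (topspace (Xle X (Suc i))) \<in> Dl i" if "i < p" for i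
    using cd_zero[OF asc_cd[OF asc that]] xiT[OF that] Ipow_mem[OF tI that] unfolding Dl_def by simp
  have Dune: "restrict (\<lambda>_. 1) (topspace (Xle X (Suc i))) \<in> Du i" if "i < p" for i
    using cd_one[OF asc_cd[OF asc that]] xiT[OF that] Ipow_mem[OF tI that] unfolding Du_def by simp
  have aF: "a i \<in> Fs i" if i: "i < p" for i
    unfolding a_def
  proof (rule lc_sup[OF _ _ _ asc_lc[OF asc i]])
    show "Dl i \<subseteq> Fs i" unfolding Dl_def by blast
    show "\<forall>y. bdd_above ((\<lambda>\<xi>. \<xi> y) ` Dl i)" using bddA[OF i] by blast
    show "up_directed (Dl i)" unfolding up_directed_def
    proof (intro conjI ballI)
      show "Dl i \<noteq> {}" using Dlne[OF i] by blast
      fix \<xi> \<eta> assume xe: "\<xi> \<in> Dl i" "\<eta> \<in> Dl i"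
      have "(\<lambda>y. max (\<xi> y) (\<eta> y)) \<in> Fs i"
        using lc_maxmin[of \<xi> "Fs i" \<eta>] xe asc_lc[OF asc i] unfolding Dl_def by blast
      then have "(\<lambda>y. max (\<xi> y) (\<eta> y)) \<in> Dl i" using xe unfolding Dl_def by simp
      then show "\<exists>\<zeta>\<in>Dl i. \<xi> \<le> \<zeta> \<and> \<eta> \<le> \<zeta>" by (intro bexI[of _ "\<lambda>y. max (\<xi> y) (\<eta> y)"]) (auto simp: le_fun_def)
    qed
  qed
  have bF: "b i \<in> Fs i" if i: "i < p" for i
    unfolding b_def
  proof (rule lc_inf[OF _ _ _ asc_lc[OF asc i]])
    show "Du i \<subseteq> Fs i" unfolding Du_def by blast
    show "\<forall>y. bdd_below ((\<lambda>\<xi>. \<xi> y) ` Du i)" using bddB[OF i] by blast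
    show "down_directed (Du i)" unfolding down_directed_def
    proof (intro conjI ballI)
      show "Du i \<noteq> {}" using Dune[OF i] by blast
      fix \<xi> \<eta> assume xe: "\<xi> \<in> Du i" "\<eta> \<in> Du i"
      have "(\<lambda>y. min (\<xi> y) (\<eta> y)) \<in> Fs i"
        using lc_maxmin[of \<xi> "Fs i" \<eta>] xe asc_lc[OF asc i] unfolding Du_def by blast
      then have "(\<lambda>y. min (\<xi> y) (\<eta> y)) \<in> Du i" using xe unfolding Du_def by simp
      then show "\<exists>\<zeta>\<in>Du i. \<zeta> \<le> \<xi> \<and> \<zeta> \<le> \<eta>" by (intro bexI[of _ "\<lambda>y. min (\<xi> y) (\<eta> y)"]) (auto simp: le_fun_def)
    qed
  qed
  have a_le: "\<eta> y \<le> a i y" if "i < p" "\<eta> \<in> Dl i" for i \<eta> y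
    unfolding a_def by (rule cSUP_upper[OF that(2) bddA[OF that(1)]])
  have b_ge: "b i y \<le> \<eta> y" if "i < p" "\<eta> \<in> Du i" for i \<eta> y
    unfolding b_def by (rule cINF_lower[OF bddB[OF that(1)] that(2)])
  have a_lt: "a i (xi i) < t i" if i: "i < p" for i
  proof -
    obtain N where N: "openin (Xle X (Suc i)) N" "xi i \<in> N" "finite ((\<lambda>\<xi>. restrict \<xi> N) ` Fs i)"
      using cd_locfin[OF asc_cd[OF asc i] xiT[OF i]] by blast
    define V where "V = (\<lambda>\<xi>. \<xi> (xi i)) ` Dl i"
    have "V \<subseteq> (\<lambda>k. k (xi i)) ` ((\<lambda>\<xi>. restrict \<xi> N) ` Fs i)"
      unfolding V_def Dl_def using N(2) by (auto simp: image_iff)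
    then have fV: "finite V" using N(3) finite_subset by blast
    have neV: "V \<noteq> {}" using Dlne[OF i] unfolding V_def by blast
    have "a i (xi i) = Sup V" unfolding a_def V_def by simp
    also have "\<dots> = Max V" using fV neV by (rule cSup_eq_Max)
    finally have "a i (xi i) \<in> V" using Max_in[OF fV neV] by simp
    then show ?thesis unfolding V_def Dl_def by auto
  qed
  have b_ge_t: "t i \<le> b i (xi i)" if i: "i < p" for i
    unfolding b_def using Dune[OF i] unfolding Du_def by (intro cINF_greatest) auto
  define C where "C = multiwedge_of X p a b"
  have isC: "is_multiwedge X p Fs C" unfolding is_multiwedge_def C_def using aF bF by blast
  have zC: "(x, t) \<in> C" unfolding C_def mw_mem using z a_lt b_ge_t unfolding xi_def by auto
  have "minimal_multiwedge X p Fs C" unfolding minimal_multiwedge_def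
  proof (intro conjI allI impI)
    show "is_multiwedge X p Fs C" by (rule isC)
    show "C \<noteq> {}" using zC by blast
    fix C'' assume H: "is_multiwedge X p Fs C'' \<and> C'' \<noteq> {} \<and> C'' \<subseteq> C"
    obtain \<eta>1 \<eta>2 where eta: "\<forall>i<p. \<eta>1 i \<in> Fs i \<and> \<eta>2 i \<in> Fs i" "C'' = multiwedge_of X p \<eta>1 \<eta>2"
      using H unfolding is_multiwedge_def by blast
    obtain y0 u0 where w0: "(y0, u0) \<in> C''" using H by fastforce
    have w0C: "(y0, u0) \<in> C" using H w0 by blast
    have "C \<subseteq> C''"
    proof
      fix w assume wC: "w \<in> C"
      obtain y u where w: "w = (y, u)" by fastforce
      have "\<eta>1 i (restrict y {..<Suc i}) < u i \<and> u i \<le> \<eta>2 i (restrict y {..<Suc i})" if i: "i < p" for i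
      proof
        have wi: "a i (restrict y {..<Suc i}) < u i \<and> u i \<le> b i (restrict y {..<Suc i})"
          using wC i unfolding w C_def mw_mem by blast
        have w0i: "a i (restrict y0 {..<Suc i}) < u0 i \<and> u0 i \<le> b i (restrict y0 {..<Suc i})"
          using w0C i unfolding C_def mw_mem by blast
        have w0e: "\<eta>1 i (restrict y0 {..<Suc i}) < u0 i \<and> u0 i \<le> \<eta>2 i (restrict y0 {..<Suc i})"
          using w0 i unfolding eta(2) mw_mem by blast
        show "\<eta>1 i (restrict y {..<Suc i}) < u i"
        proof (cases "\<eta>1 i (xi i) < t i")
          case True
          then have "\<eta>1 i \<in> Dl i" using eta(1) i unfolding Dl_def by blast
          then show ?thesis using a_le[OF i] wi by (meson le_less_trans)
        next
          case False
          then have "\<eta>1 i \<in> Du i" using eta(1) i unfolding Du_def by auto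
          then have "b i (restrict y0 {..<Suc i}) \<le> \<eta>1 i (restrict y0 {..<Suc i})" using b_ge[OF i] by blast
          then show ?thesis using w0i w0e by linarith
        qed
        show "u i \<le> \<eta>2 i (restrict y {..<Suc i})"
        proof (cases "t i \<le> \<eta>2 i (xi i)")
          case True
          then have "\<eta>2 i \<in> Du i" using eta(1) i unfolding Du_def by blast
          then show ?thesis using b_ge[OF i] wi by (meson order_trans)
        next
          case False
          then have "\<eta>2 i \<in> Dl i" using eta(1) i unfolding Dl_def by auto
          then have "\<eta>2 i (restrict y0 {..<Suc i}) \<le> a i (restrict y0 {..<Suc i})" using a_le[OF i] by blast
          then show ?thesis using w0i w0e by linarith
        qed
      qed
      moreover have "(y, u) \<in> dom_space X p" using wC unfolding w C_def mw_mem by blast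
      ultimately show "w \<in> C''" unfolding w eta(2) mw_mem by blast
    qed
    then show "C'' = C" using H by blast
  qed
  then show ?thesis using zC by blast
qed

lemma locfin_minimal:
  assumes asc: "ascending_lcomplete X p Fs" and x: "x \<in> topspace (Xle X p)"
  shows "\<exists>N. openin (Xle X p) N \<and> x \<in> N \<and> finite {C. minimal_multiwedge X p Fs C \<and> fst ` C \<inter> N \<noteq> {}}"
proof -
  have lc: "lattice_closed p Fs" by (rule asc_lattice_closed[OF asc])
  have "\<forall>i\<in>{..<p}. \<exists>V. openin (Xle X (Suc i)) V \<and> restrict x {..<Suc i} \<in> V \<and> finite ((\<lambda>\<xi>. restrict \<xi> V) ` Fs i)"
  proof
    fix i assume "i \<in> {..<p}"
    then have i: "i < p" by simp
    show "\<exists>V. openin (Xle X (Suc i)) V \<and> restrict x {..<Suc i} \<in> V \<and> finite ((\<lambda>\<xi>. restrict \<xi> V) ` Fs i)"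
      by (rule cd_locfin[OF asc_cd[OF asc i] restrict_in_Xle[OF x]]) (use i in simp)
  qed
  then have "\<exists>Ni. \<forall>i\<in>{..<p}. openin (Xle X (Suc i)) (Ni i) \<and> restrict x {..<Suc i} \<in> Ni i \<and> finite ((\<lambda>\<xi>. restrict \<xi> (Ni i)) ` Fs i)"
    by (rule bchoice)
  then obtain Ni where Ni0: "\<forall>i\<in>{..<p}. openin (Xle X (Suc i)) (Ni i) \<and> restrict x {..<Suc i} \<in> Ni i \<and> finite ((\<lambda>\<xi>. restrict \<xi> (Ni i)) ` Fs i)" ..
  have Ni: "openin (Xle X (Suc i)) (Ni i)" "restrict x {..<Suc i} \<in> Ni i" "finite ((\<lambda>\<xi>. restrict \<xi> (Ni i)) ` Fs i)"
    if "i < p" for i using Ni0 that by auto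
  define N where "N = {y \<in> topspace (Xle X p). \<forall>i<p. restrict y {..<Suc i} \<in> Ni i}"
  define U where "U i = {y \<in> topspace (Xle X p). restrict y {..<Suc i} \<in> Ni i}" for i
  have "openin (Xle X p) (U i)" if "i \<in> {..<p}" for i
    unfolding U_def using that by (intro openin_continuous_map_preimage[OF cont_restrict_Xle Ni(1)]) auto
  then have "openin (Xle X p) ((\<Inter>i\<in>{..<p}. U i) \<inter> topspace (Xle X p))" by (intro openin_INT) auto
  moreover have "(\<Inter>i\<in>{..<p}. U i) \<inter> topspace (Xle X p) = N" unfolding U_def N_def by auto
  ultimately have Nopen: "openin (Xle X p) N" by simp
  have xN: "x \<in> N" unfolding N_def using x Ni(2) by auto
  define S where "S = {C. minimal_multiwedge X p Fs C \<and> fst ` C \<inter> N \<noteq> {}}"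
  have "\<forall>C\<in>S. \<exists>ab. (\<forall>i<p. fst ab i \<in> Fs i \<and> snd ab i \<in> Fs i) \<and> C = multiwedge_of X p (fst ab) (snd ab)"
  proof
    fix C assume "C \<in> S"
    then have "is_multiwedge X p Fs C" unfolding S_def minimal_multiwedge_def by blast
    then obtain a b where "\<forall>i<p. a i \<in> Fs i \<and> b i \<in> Fs i" "C = multiwedge_of X p a b"
      unfolding is_multiwedge_def by blast
    then show "\<exists>ab. (\<forall>i<p. fst ab i \<in> Fs i \<and> snd ab i \<in> Fs i) \<and> C = multiwedge_of X p (fst ab) (snd ab)"
      by (intro exI[of _ "(a, b)"]) simp
  qed
  then have "\<exists>rep. \<forall>C\<in>S. (\<forall>i<p. fst (rep C) i \<in> Fs i \<and> snd (rep C) i \<in> Fs i) \<and> C = multiwedge_of X p (fst (rep C)) (snd (rep C))"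
    by (rule bchoice)
  then obtain rep where rep: "\<forall>C\<in>S. (\<forall>i<p. fst (rep C) i \<in> Fs i \<and> snd (rep C) i \<in> Fs i) \<and> C = multiwedge_of X p (fst (rep C)) (snd (rep C))" ..
  define key where "key C = (\<lambda>i\<in>{..<p}. (restrict (fst (rep C) i) (Ni i), restrict (snd (rep C) i) (Ni i)))" for C
  define R where "R i = (\<lambda>\<xi>. restrict \<xi> (Ni i)) ` Fs i" for i
  have "key ` S \<subseteq> (\<Pi>\<^sub>E i\<in>{..<p}. R i \<times> R i)"
  proof
    fix k assume "k \<in> key ` S"
    then obtain C where C: "C \<in> S" "k = key C" by blast
    have rC: "\<forall>i<p. fst (rep C) i \<in> Fs i \<and> snd (rep C) i \<in> Fs i" using rep C(1) by blast
    show "k \<in> (\<Pi>\<^sub>E i\<in>{..<p}. R i \<times> R i)"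
      unfolding C(2) key_def
    proof (rule PiE_I)
      fix i assume "i \<in> {..<p}"
      then have "fst (rep C) i \<in> Fs i" "snd (rep C) i \<in> Fs i" using rC by auto
      then show "(\<lambda>i\<in>{..<p}. (restrict (fst (rep C) i) (Ni i), restrict (snd (rep C) i) (Ni i))) i \<in> R i \<times> R i"
        using \<open>i \<in> {..<p}\<close> unfolding R_def by simp
    qed simp
  qed
  moreover have "finite (\<Pi>\<^sub>E i\<in>{..<p}. R i \<times> R i)"
    by (intro finite_PiE) (auto simp: R_def Ni(3))
  ultimately have fk: "finite (key ` S)" using finite_subset by blast
  have "inj_on key S"
  proof (rule inj_onI)
    fix C1 C2 assume C1: "C1 \<in> S" and C2: "C2 \<in> S" and k: "key C1 = key C2"
    have m1: "minimal_multiwedge X p Fs C1" and m2: "minimal_multiwedge X p Fs C2" using C1 C2 unfolding S_def by auto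
    obtain y u where yu: "(y, u) \<in> C1" "y \<in> N" using C1 unfolding S_def by fastforce
    define a1 where "a1 = fst (rep C1)"
    define b1 where "b1 = snd (rep C1)"
    define a2 where "a2 = fst (rep C2)"
    define b2 where "b2 = snd (rep C2)"
    have e1: "C1 = multiwedge_of X p a1 b1" using rep C1 unfolding a1_def b1_def by blast
    have e2: "C2 = multiwedge_of X p a2 b2" using rep C2 unfolding a2_def b2_def by blast
    have m: "(y, u) \<in> dom_space X p \<and> (\<forall>i<p. a1 i (restrict y {..<Suc i}) < u i \<and> u i \<le> b1 i (restrict y {..<Suc i}))"
      using yu(1) unfolding e1 mw_mem .
    have "(y, u) \<in> multiwedge_of X p a2 b2"
      unfolding mw_mem
    proof (rule conjI)
      show "(y, u) \<in> dom_space X p" using m by blast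
      show "\<forall>i<p. a2 i (restrict y {..<Suc i}) < u i \<and> u i \<le> b2 i (restrict y {..<Suc i})"
      proof (intro allI impI)
      fix i assume i: "i < p"
      have yi: "restrict y {..<Suc i} \<in> Ni i" using yu(2) i unfolding N_def by blast
      have "key C1 i = key C2 i" using k by simp
      then have "restrict (a1 i) (Ni i) = restrict (a2 i) (Ni i)"
        "restrict (b1 i) (Ni i) = restrict (b2 i) (Ni i)"
        using i unfolding key_def a1_def a2_def b1_def b2_def by auto
      then have "restrict (a1 i) (Ni i) (restrict y {..<Suc i}) = restrict (a2 i) (Ni i) (restrict y {..<Suc i})"
        "restrict (b1 i) (Ni i) (restrict y {..<Suc i}) = restrict (b2 i) (Ni i) (restrict y {..<Suc i})"
        by simp_all
      then have "a1 i (restrict y {..<Suc i}) = a2 i (restrict y {..<Suc i})"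
        "b1 i (restrict y {..<Suc i}) = b2 i (restrict y {..<Suc i})"
        using yi by simp_all
      moreover have "a1 i (restrict y {..<Suc i}) < u i \<and> u i \<le> b1 i (restrict y {..<Suc i})"
        using m i by blast
      ultimately show "a2 i (restrict y {..<Suc i}) < u i \<and> u i \<le> b2 i (restrict y {..<Suc i})"
        by simp
    qed
    qed
    then have "(y, u) \<in> C2" using e2 by simp
    then show "C1 = C2" using minimal_disjoint[OF lc m1 m2 yu(1)] by blast
  qed
  then have "finite S" using fk finite_imageD by blast
  then show ?thesis using Nopen xN unfolding S_def by blast
qed

lemma cont_diff_const:
  fixes h :: "'b \<Rightarrow> 'g::{topological_group_add}"
  shows "continuous_map Z euclidean h \<Longrightarrow> continuous_map Z euclidean (\<lambda>y. h y - c)"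
  by (simp add: continuous_map_atin tendsto_diff)

lemma cont_add_const:
  fixes h :: "'b \<Rightarrow> 'g::{topological_group_add}"
  shows "continuous_map Z euclidean h \<Longrightarrow> continuous_map Z euclidean (\<lambda>y. c + h y)"
  by (simp add: continuous_map_atin tendsto_add)

lemma small_nbhd:
  fixes U :: "'q::{ab_group_add, topological_group_add} set"
  assumes "open U" "0 \<in> U"
  obtains W where "open W" "0 \<in> W" "\<And>w1 w2. w1 \<in> W \<Longrightarrow> w2 \<in> W \<Longrightarrow> w1 - w2 \<in> U"
proof -
  have id: "((\<lambda>x::'q\<times>'q. x) \<longlongrightarrow> (0,0)) (nhds (0,0))" by (rule filterlim_ident)
  have "((\<lambda>x. fst x - snd x) \<longlongrightarrow> fst ((0::'q),(0::'q)) - snd ((0::'q),(0::'q))) (nhds ((0::'q), (0::'q)))"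
    by (intro tendsto_diff tendsto_fst[OF id] tendsto_snd[OF id])
  then have "eventually (\<lambda>x. fst x - snd x \<in> U) (nhds ((0::'q), (0::'q)))"
    using assms by (simp add: topological_tendstoD)
  then obtain Pf Pg where P: "eventually Pf (nhds (0::'q))" "eventually Pg (nhds (0::'q))"
    "\<And>x y. Pf x \<Longrightarrow> Pg y \<Longrightarrow> x - y \<in> U"
    unfolding nhds_prod eventually_prod_filter by auto
  obtain S1 where S1: "open S1" "0 \<in> S1" "\<And>x. x \<in> S1 \<Longrightarrow> Pf x" using P(1) unfolding eventually_nhds by blast
  obtain S2 where S2: "open S2" "0 \<in> S2" "\<And>x. x \<in> S2 \<Longrightarrow> Pg x" using P(2) unfolding eventually_nhds by blast
  show thesis
    by (rule that[of "S1 \<inter> S2"]) (use S1 S2 P(3) in auto)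
qed

lemma open_translate_preimage:
  fixes W :: "'q::{ab_group_add, topological_group_add} set"
  assumes "open W"
  shows "open {q. q - c \<in> W}"
proof -
  have "continuous_on UNIV (\<lambda>q::'q. q - c)" by (intro continuous_intros)
  then have "open ((\<lambda>q. q - c) -` W)" using assms by (simp add: continuous_on_open_vimage)
  then show ?thesis by (simp add: vimage_def)
qed

lemma cover_exists:
  fixes g :: "((nat \<Rightarrow> 'a) \<times> (nat \<Rightarrow> real)) set \<Rightarrow> (nat \<Rightarrow> 'a) \<Rightarrow> 'q::{ab_group_add, topological_group_add}"
  assumes asc: "ascending_lcomplete X p Fs"
    and gcont: "\<And>C. minimal_multiwedge X p Fs C \<Longrightarrow>
        continuous_map (subtopology (Xle X p) (Xle X p closure_of (fst ` C))) euclidean (g C)"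
    and U: "open U" "0 \<in> U"
  shows "\<exists>Oc. \<forall>x\<in>topspace (Xle X p). openin (Xle X p) (Oc x) \<and> x \<in> Oc x \<and>
     (\<forall>C y y'. minimal_multiwedge X p Fs C \<longrightarrow> y \<in> Oc x \<longrightarrow> y' \<in> Oc x \<longrightarrow>
        y \<in> Xle X p closure_of (fst ` C) \<longrightarrow> y' \<in> Xle X p closure_of (fst ` C) \<longrightarrow> g C y - g C y' \<in> U)"
proof -
  let ?Y = "Xle X p"
  obtain W where W: "open W" "0 \<in> W" "\<And>w1 w2. w1 \<in> W \<Longrightarrow> w2 \<in> W \<Longrightarrow> w1 - w2 \<in> U"
    using small_nbhd[OF U] by blast
  have "\<exists>Ox. openin ?Y Ox \<and> x \<in> Ox \<and>
     (\<forall>C y y'. minimal_multiwedge X p Fs C \<longrightarrow> y \<in> Ox \<longrightarrow> y' \<in> Ox \<longrightarrow>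
        y \<in> ?Y closure_of (fst ` C) \<longrightarrow> y' \<in> ?Y closure_of (fst ` C) \<longrightarrow> g C y - g C y' \<in> U)"
    if x: "x \<in> topspace ?Y" for x
  proof -
    obtain N where N: "openin ?Y N" "x \<in> N" "finite {C. minimal_multiwedge X p Fs C \<and> fst ` C \<inter> N \<noteq> {}}"
      using locfin_minimal[OF asc x] by blast
    define S where "S = {C. minimal_multiwedge X p Fs C \<and> fst ` C \<inter> N \<noteq> {}}"
    have "\<forall>C\<in>S. \<exists>V. openin ?Y V \<and> x \<in> V \<and> (\<forall>y\<in>V. y \<in> ?Y closure_of (fst ` C) \<longrightarrow> g C y - g C x \<in> W)
                 \<and> (x \<notin> ?Y closure_of (fst ` C) \<longrightarrow> V \<inter> ?Y closure_of (fst ` C) = {})"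
    proof
      fix C assume "C \<in> S"
      then have mC: "minimal_multiwedge X p Fs C" unfolding S_def by blast
      define K where "K = ?Y closure_of (fst ` C)"
      have KY: "K \<subseteq> topspace ?Y" unfolding K_def by (rule closure_of_subset_topspace)
      show "\<exists>V. openin ?Y V \<and> x \<in> V \<and> (\<forall>y\<in>V. y \<in> ?Y closure_of (fst ` C) \<longrightarrow> g C y - g C x \<in> W)
                 \<and> (x \<notin> ?Y closure_of (fst ` C) \<longrightarrow> V \<inter> ?Y closure_of (fst ` C) = {})"
      proof (cases "x \<in> K")
        case True
        have Q: "open {q. q - g C x \<in> W}" by (rule open_translate_preimage[OF W(1)])
        have "openin (subtopology ?Y K) {y \<in> topspace (subtopology ?Y K). g C y \<in> {q. q - g C x \<in> W}}"
          by (rule openin_continuous_map_preimage[OF gcont[OF mC, folded K_def]]) (use Q in simp)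
        then obtain T where T: "openin ?Y T" "{y \<in> topspace (subtopology ?Y K). g C y \<in> {q. q - g C x \<in> W}} = T \<inter> K"
          unfolding openin_subtopology by blast
        have tK: "topspace (subtopology ?Y K) = K" using KY by (simp add: topspace_subtopology Int_absorb1)
        have xT: "x \<in> T" using T(2) True W(2) tK by auto
        show ?thesis
        proof (intro exI conjI ballI impI)
          show "openin ?Y T" "x \<in> T" using T(1) xT by auto
          fix y assume "y \<in> T" "y \<in> ?Y closure_of (fst ` C)"
          then have "y \<in> T \<inter> K" unfolding K_def by blast
          then show "g C y - g C x \<in> W" using T(2) by blast
        next
          assume "x \<notin> ?Y closure_of (fst ` C)" then show "T \<inter> ?Y closure_of (fst ` C) = {}"
            using True unfolding K_def by blast
        qed
      next
        case False
        have "openin ?Y (topspace ?Y - K)" unfolding K_def by (intro openin_diff) auto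
        then show ?thesis using False x unfolding K_def by (intro exI[of _ "topspace ?Y - K"]) (auto simp: K_def)
      qed
    qed
    then have "\<exists>V. \<forall>C\<in>S. openin ?Y (V C) \<and> x \<in> V C \<and> (\<forall>y\<in>V C. y \<in> ?Y closure_of (fst ` C) \<longrightarrow> g C y - g C x \<in> W)
                 \<and> (x \<notin> ?Y closure_of (fst ` C) \<longrightarrow> V C \<inter> ?Y closure_of (fst ` C) = {})"
      by (rule bchoice)
    then obtain V where V: "\<forall>C\<in>S. openin ?Y (V C) \<and> x \<in> V C \<and> (\<forall>y\<in>V C. y \<in> ?Y closure_of (fst ` C) \<longrightarrow> g C y - g C x \<in> W)
                 \<and> (x \<notin> ?Y closure_of (fst ` C) \<longrightarrow> V C \<inter> ?Y closure_of (fst ` C) = {})" ..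
    define Ox where "Ox = N \<inter> ((\<Inter>C\<in>S. V C) \<inter> topspace ?Y)"
    have "openin ?Y ((\<Inter>C\<in>S. V C) \<inter> topspace ?Y)"
      using N(3) V unfolding S_def[symmetric] by (intro openin_INT) auto
    then have Oo: "openin ?Y Ox" unfolding Ox_def using N(1) by blast
    have xO: "x \<in> Ox" unfolding Ox_def using N(2) x V by blast
    show ?thesis
    proof (intro exI conjI allI impI)
      show "openin ?Y Ox" "x \<in> Ox" using Oo xO by auto
      fix C y y' assume mC: "minimal_multiwedge X p Fs C" and y: "y \<in> Ox" and y': "y' \<in> Ox"
        and yK: "y \<in> ?Y closure_of (fst ` C)" and y'K: "y' \<in> ?Y closure_of (fst ` C)"
      have yN: "y \<in> N" using y unfolding Ox_def by blast
      obtain w where "w \<in> fst ` C" "w \<in> N" using yK yN N(1) unfolding in_closure_of by blast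
      then have CS: "C \<in> S" unfolding S_def using mC by blast
      have yV: "y \<in> V C" and y'V: "y' \<in> V C" using y y' CS unfolding Ox_def by blast+
      have xK: "x \<in> ?Y closure_of (fst ` C)"
      proof (rule ccontr)
        assume "x \<notin> ?Y closure_of (fst ` C)"
        then have "V C \<inter> ?Y closure_of (fst ` C) = {}" using V CS by blast
        then show False using yV yK by blast
      qed
      have "g C y - g C x \<in> W" "g C y' - g C x \<in> W" using V CS yV y'V yK y'K by blast+
      then have "(g C y - g C x) - (g C y' - g C x) \<in> U" by (rule W(3))
      then show "g C y - g C y' \<in> U" by (simp add: algebra_simps)
    qed
  qed
  then have "\<forall>x\<in>topspace ?Y. \<exists>Ox. openin ?Y Ox \<and> x \<in> Ox \<and>
     (\<forall>C y y'. minimal_multiwedge X p Fs C \<longrightarrow> y \<in> Ox \<longrightarrow> y' \<in> Ox \<longrightarrow>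
        y \<in> ?Y closure_of (fst ` C) \<longrightarrow> y' \<in> ?Y closure_of (fst ` C) \<longrightarrow> g C y - g C y' \<in> U)"
    by (rule ballI)
  then show ?thesis by (rule bchoice)
qed

lemma main_pos:
  fixes X :: "nat \<Rightarrow> 'x topology" and p :: nat
    and \<pi> :: "'a::{ab_group_add, topological_group_add} \<Rightarrow> 'q::{ab_group_add, topological_group_add}"
    and f :: "(nat \<Rightarrow> 'x) \<times> (nat \<Rightarrow> real) \<Rightarrow> 'q" and s :: "'q \<Rightarrow> 'a"
  assumes p: "0 < p"
    and metr: "\<forall>i<p. metrizable_space (X i)"
    and pi_hom: "\<forall>u v. \<pi> (u + v) = \<pi> u + \<pi> v"
    and pi_surj: "\<forall>q. \<exists>a. \<pi> a = q"
    and U: "open U" "0 \<in> U" and scont: "continuous_on U s" and sec: "\<forall>y\<in>U. \<pi> (s y) = y"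
    and ctrl: "semi_controls X p Fs f"
  shows "\<exists>F. semi_layered X p F \<and> (\<forall>z\<in>dom_space X p. \<pi> (F z) = f z)"
proof -
  let ?Y = "Xle X p"
  have asc: "ascending_lcomplete X p Fs" using ctrl unfolding semi_controls_def by blast
  have lc: "lattice_closed p Fs" by (rule asc_lattice_closed[OF asc])
  have "\<forall>C. \<exists>fC. minimal_multiwedge X p Fs C \<longrightarrow>
          continuous_map (subtopology ?Y (?Y closure_of (fst ` C))) euclidean fC \<and> (\<forall>z\<in>C. f z = fC (fst z))"
    using ctrl unfolding semi_controls_def by blast
  then have "\<exists>g. \<forall>C. minimal_multiwedge X p Fs C \<longrightarrow>
          continuous_map (subtopology ?Y (?Y closure_of (fst ` C))) euclidean (g C) \<and> (\<forall>z\<in>C. f z = g C (fst z))"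
    by (rule choice)
  then obtain g where g0: "\<forall>C. minimal_multiwedge X p Fs C \<longrightarrow>
          continuous_map (subtopology ?Y (?Y closure_of (fst ` C))) euclidean (g C) \<and> (\<forall>z\<in>C. f z = g C (fst z))" ..
  have gcont: "continuous_map (subtopology ?Y (?Y closure_of (fst ` C))) euclidean (g C)"
    if "minimal_multiwedge X p Fs C" for C using g0 that by blast
  have gf: "f z = g C (fst z)" if "minimal_multiwedge X p Fs C" "z \<in> C" for C z using g0 that by blast
  have "metrizable_space ?Y" unfolding Xle_def
    by (subst metrizable_space_product_topology) (use metr in \<open>auto intro: countable_finite\<close>)
  then obtain M d where Md: "Metric_space M d" "?Y = Metric_space.mtopology M d"
    unfolding metrizable_space_def by blast
  interpret Metric_space M d by (rule Md(1))
  have topM: "topspace ?Y = M" using Md(2) by simp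
  obtain Oc where Oc0: "\<forall>x\<in>topspace ?Y. openin ?Y (Oc x) \<and> x \<in> Oc x \<and>
     (\<forall>C y y'. minimal_multiwedge X p Fs C \<longrightarrow> y \<in> Oc x \<longrightarrow> y' \<in> Oc x \<longrightarrow>
        y \<in> ?Y closure_of (fst ` C) \<longrightarrow> y' \<in> ?Y closure_of (fst ` C) \<longrightarrow> g C y - g C y' \<in> U)"
    using cover_exists[OF asc gcont U] by blast
  have Oc1: "openin mtopology (Oc x) \<and> x \<in> Oc x" if "x \<in> M" for x
    using Oc0 that topM Md(2) by metis
  have Oc2: "g C y - g C y' \<in> U" if "x \<in> M" "minimal_multiwedge X p Fs C" "y \<in> Oc x" "y' \<in> Oc x"
     "y \<in> ?Y closure_of (fst ` C)" "y' \<in> ?Y closure_of (fst ` C)" for x C y y'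
    using Oc0 that topM by blast
  obtain Cn idx where
    A0: "\<And>n. Cn n \<subseteq> M" and
    A1: "\<And>n c y. c \<in> Cn n \<Longrightarrow> y \<in> M \<Longrightarrow> d c y < 5*(1/2)^n \<Longrightarrow> y \<in> Oc (idx c)" and
    A2: "\<And>n c c'. c \<in> Cn n \<Longrightarrow> c' \<in> Cn n \<Longrightarrow> d c c' < 5*(1/2)^n \<Longrightarrow> idx c = idx c'" and
    A3: "\<And>y. y \<in> M \<Longrightarrow> \<exists>n. y \<in> Cn n" and
    A4: "\<And>n c. c \<in> Cn n \<Longrightarrow> idx c \<in> M"
    using sep_centers[of Oc, OF Oc1] by blast
  obtain \<mu> :: "nat \<Rightarrow> (nat \<Rightarrow> 'x) \<Rightarrow> real" where
    B1: "\<And>n. continuous_map mtopology euclideanreal (\<mu> n)" and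
    B2: "\<And>n y. 0 \<le> \<mu> n y \<and> \<mu> n y \<le> 1" and
    B3: "\<And>n y. y \<notin> M \<Longrightarrow> \<mu> n y = 0" and
    B4: "\<And>y. y \<in> M \<Longrightarrow> \<mu> 0 y = 1" and
    B5: "\<And>n y. \<mu> (Suc n) y \<le> \<mu> n y" and
    B6: "\<And>y. y \<in> M \<Longrightarrow> \<exists>V n. openin mtopology V \<and> y \<in> V \<and> (\<forall>m\<ge>n. \<forall>y'\<in>V. \<mu> m y' = 0)" and
    B7: "\<And>n y. y \<in> M \<Longrightarrow> \<mu> (Suc n) y < \<mu> n y \<Longrightarrow> \<exists>c\<in>Cn n. d y c < (1/2)^n"
    using chain_exists[OF A0 A3] by blast
  define eps where "eps n = (1/2::real)^n" for n
  have eps_pos: "eps n > 0" for n unfolding eps_def by simp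
  have \<mu>anti: "\<mu> m y \<le> \<mu> n y" if "n \<le> m" for n m y
    using that by (induction m rule: dec_induct) (auto intro: order_trans[OF B5])
  have pS: "Suc (p - 1) = p" using p by simp
  have cdF: "continuous_dissection ?Y (Fs (p - 1))" using asc_cd[OF asc, of "p-1"] p pS by simp
  have und: "(undefined::real) = 0" if "y \<notin> M" for y
  proof -
    have "restrict (\<lambda>_. 0::real) (topspace ?Y) y = 0" by (rule cd_ext[OF cdF cd_zero[OF cdF]]) (use that topM in simp)
    then show ?thesis using that topM by simp
  qed
  define Mf where "Mf = range \<mu> \<union> {restrict (\<lambda>_. 0) M, restrict (\<lambda>_. 1) M}"
  have memM: "continuous_map ?Y (subtopology euclideanreal {0..1}) \<xi> \<and> (\<forall>y. y \<notin> M \<longrightarrow> \<xi> y = 0)"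
    if "\<xi> \<in> Mf" for \<xi>
  proof -
    from that consider n where "\<xi> = \<mu> n" | "\<xi> = restrict (\<lambda>_. 0) M" | "\<xi> = restrict (\<lambda>_. 1) M" unfolding Mf_def by blast
    then show "continuous_map ?Y (subtopology euclideanreal {0..1}) \<xi> \<and> (\<forall>y. y \<notin> M \<longrightarrow> \<xi> y = 0)"
    proof cases
      case 1
      have "continuous_map ?Y euclideanreal (\<mu> n)" using B1 Md(2) by simp
      then show ?thesis unfolding 1 using B2 B3 by (auto simp: continuous_map_in_subtopology)
    next
      case 2
      have "continuous_map ?Y euclideanreal (\<lambda>_. 0::real)" by simp
      then have "continuous_map ?Y euclideanreal (restrict (\<lambda>_. 0::real) M)"
        by (rule continuous_map_eq) (simp add: topM)
      then show ?thesis unfolding 2 using und by (auto simp: continuous_map_in_subtopology)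
    next
      case 3
      have "continuous_map ?Y euclideanreal (\<lambda>_. 1::real)" by simp
      then have "continuous_map ?Y euclideanreal (restrict (\<lambda>_. 1::real) M)"
        by (rule continuous_map_eq) (simp add: topM)
      then show ?thesis unfolding 3 using und by (auto simp: continuous_map_in_subtopology)
    qed
  qed
  have locM: "\<exists>U. openin ?Y U \<and> y \<in> U \<and> finite ((\<lambda>\<xi>. restrict \<xi> U) ` Mf)" if y: "y \<in> M" for y
  proof -
    obtain V n where V: "openin mtopology V" "y \<in> V" "\<forall>m\<ge>n. \<forall>y'\<in>V. \<mu> m y' = 0" using B6[OF y] by blast
    have VM: "V \<subseteq> M" using V(1) openin_subset by fastforce
    have "(\<lambda>\<xi>. restrict \<xi> V) ` Mf \<subseteq> (\<lambda>m. restrict (\<mu> m) V) ` {..<n} \<union> {restrict (\<lambda>_. 0) V, restrict (\<lambda>_. 1) V}"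
    proof
      fix k assume "k \<in> (\<lambda>\<xi>. restrict \<xi> V) ` Mf"
      then obtain \<xi> where \<xi>: "\<xi> \<in> Mf" "k = restrict \<xi> V" by blast
      then consider m where "\<xi> = \<mu> m" | "\<xi> = restrict (\<lambda>_. 0) M" | "\<xi> = restrict (\<lambda>_. 1) M" unfolding Mf_def by blast
      then show "k \<in> (\<lambda>m. restrict (\<mu> m) V) ` {..<n} \<union> {restrict (\<lambda>_. 0) V, restrict (\<lambda>_. 1) V}"
      proof cases
        case 1
        show ?thesis
        proof (cases "m < n")
          case True then show ?thesis using \<xi>(2) 1 by blast
        next
          case False
          then have "k = restrict (\<lambda>_. 0) V" using \<xi>(2) 1 V(3) by (auto simp: fun_eq_iff)
          then show ?thesis by blast
        qed
      next
        case 2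
        then have "k = restrict (\<lambda>_. 0) V" using \<xi>(2) VM by (auto simp: fun_eq_iff)
        then show ?thesis by blast
      next
        case 3
        then have "k = restrict (\<lambda>_. 1) V" using \<xi>(2) VM by (auto simp: fun_eq_iff)
        then show ?thesis by blast
      qed
    qed
    moreover have "finite ((\<lambda>m. restrict (\<mu> m) V) ` {..<n} \<union> {restrict (\<lambda>_. 0) V, restrict (\<lambda>_. 1) V})" by simp
    ultimately have "finite ((\<lambda>\<xi>. restrict \<xi> V) ` Mf)" by (rule finite_subset)
    moreover have "openin ?Y V" using V(1) Md(2) by simp
    ultimately show "\<exists>U. openin ?Y U \<and> y \<in> U \<and> finite ((\<lambda>\<xi>. restrict \<xi> U) ` Mf)" using V(2) by blast
  qed
  have cdM: "continuous_dissection ?Y Mf"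
    unfolding continuous_dissection_def topM
  proof (intro conjI ballI)
    show "continuous_map ?Y (subtopology euclideanreal {0..1}) \<xi>" if "\<xi> \<in> Mf" for \<xi> using memM[OF that] by blast
    show "\<forall>y. y \<notin> M \<longrightarrow> \<xi> y = 0" if "\<xi> \<in> Mf" for \<xi> using memM[OF that] by blast
    show "restrict (\<lambda>_. 0) M \<in> Mf" "restrict (\<lambda>_. 1) M \<in> Mf" unfolding Mf_def by blast+
    show "\<exists>U. openin ?Y U \<and> y \<in> U \<and> finite ((\<lambda>\<xi>. restrict \<xi> U) ` Mf)" if "y \<in> M" for y
      by (rule locM[OF that])
  qed
  obtain L where L: "continuous_dissection ?Y L" "l_complete L" "Fs (p - 1) \<subseteq> L" "Mf \<subseteq> L"
    using lattice_closure[OF cdF cdM] by blast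
  define Fs' where "Fs' = Fs((p - 1) := L)"
  have asc': "ascending_lcomplete X p Fs'"
    unfolding ascending_lcomplete_def
  proof (intro allI impI)
    fix i assume i: "i < p"
    show "continuous_dissection (Xle X (Suc i)) (Fs' i) \<and> l_complete (Fs' i)"
    proof (cases "i = p - 1")
      case True then show ?thesis using L pS unfolding Fs'_def by simp
    next
      case False then show ?thesis using asc_cd[OF asc i] asc_lc[OF asc i] unfolding Fs'_def by simp
    qed
  qed
  have lc': "lattice_closed p Fs'" by (rule asc_lattice_closed[OF asc'])
  have FsFs': "\<xi> \<in> Fs' i" if "\<xi> \<in> Fs i" for i \<xi>
    using that L(3) unfolding Fs'_def by (cases "i = p - 1") auto
  have mw_lift: "is_multiwedge X p Fs' C" if "is_multiwedge X p Fs C" for C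
    using that FsFs' unfolding is_multiwedge_def by blast
  have Mf_L: "\<mu> n \<in> Fs' (p - 1)" for n using L(4) unfolding Fs'_def Mf_def by auto
  define lo where "lo n i = (if i = p - 1 then \<mu> (Suc n) else restrict (\<lambda>_. 0) (topspace (Xle X (Suc i))))" for n i
  define hi where "hi n i = (if i = p - 1 then \<mu> n else restrict (\<lambda>_. 1) (topspace (Xle X (Suc i))))" for n i
  define slab where "slab n = multiwedge_of X p (lo n) (hi n)" for n
  have slab_is: "is_multiwedge X p Fs' (slab n)" for n
    unfolding is_multiwedge_def slab_def
  proof (intro exI conjI allI impI)
    fix i assume i: "i < p"
    show "lo n i \<in> Fs' i"
    proof (cases "i = p - 1")
      case True then show ?thesis unfolding lo_def using Mf_L by simp
    next
      case False then show ?thesis unfolding lo_def using FsFs' cd_zero[OF asc_cd[OF asc i]] by simp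
    qed
    show "hi n i \<in> Fs' i"
    proof (cases "i = p - 1")
      case True then show ?thesis unfolding hi_def using Mf_L by simp
    next
      case False then show ?thesis unfolding hi_def using FsFs' cd_one[OF asc_cd[OF asc i]] by simp
    qed
  qed (rule refl)
  define cond where "cond n x t = (\<mu> (Suc n) x < t (p - 1) \<and> t (p - 1) \<le> \<mu> n x)" for n x and t :: "nat \<Rightarrow> real"
  have dom_facts: "x \<in> M" "t \<in> Ipow p" if "(x, t) \<in> dom_space X p" for x t
    using that topM by (auto simp: dom_space_def)
  have slab_mem: "(x, t) \<in> slab n \<longleftrightarrow> cond n x t" if xt: "(x, t) \<in> dom_space X p" for n x t
  proof -
    have xT: "x \<in> topspace ?Y" using xt by (simp add: dom_space_def)
    have tI: "t \<in> Ipow p" using xt by (simp add: dom_space_def)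
    have rx: "restrict x {..<Suc (p - 1)} = x"
      using xT pS by (simp add: topspace_Xle PiE_def extensional_restrict)
    have other: "lo n i (restrict x {..<Suc i}) < t i \<and> t i \<le> hi n i (restrict x {..<Suc i})"
      if "i < p" "i \<noteq> p - 1" for i
    proof -
      have "restrict x {..<Suc i} \<in> topspace (Xle X (Suc i))" using restrict_in_Xle[OF xT] that by simp
      then show ?thesis unfolding lo_def hi_def using that Ipow_mem[OF tI that(1)] by simp
    qed
    have "(x, t) \<in> slab n \<longleftrightarrow> (\<forall>i<p. lo n i (restrict x {..<Suc i}) < t i \<and> t i \<le> hi n i (restrict x {..<Suc i}))"
      unfolding slab_def mw_mem using xt by blast
    also have "\<dots> \<longleftrightarrow> lo n (p - 1) (restrict x {..<Suc (p - 1)}) < t (p - 1) \<and> t (p - 1) \<le> hi n (p - 1) (restrict x {..<Suc (p - 1)})"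
    proof
      assume "\<forall>i<p. lo n i (restrict x {..<Suc i}) < t i \<and> t i \<le> hi n i (restrict x {..<Suc i})"
      moreover have "p - 1 < p" using p by simp
      ultimately show "lo n (p - 1) (restrict x {..<Suc (p - 1)}) < t (p - 1) \<and> t (p - 1) \<le> hi n (p - 1) (restrict x {..<Suc (p - 1)})"
        by blast
    next
      assume H: "lo n (p - 1) (restrict x {..<Suc (p - 1)}) < t (p - 1) \<and> t (p - 1) \<le> hi n (p - 1) (restrict x {..<Suc (p - 1)})"
      show "\<forall>i<p. lo n i (restrict x {..<Suc i}) < t i \<and> t i \<le> hi n i (restrict x {..<Suc i})"
      proof (intro allI impI)
        fix i assume i: "i < p"
        show "lo n i (restrict x {..<Suc i}) < t i \<and> t i \<le> hi n i (restrict x {..<Suc i})"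
          by (cases "i = p - 1") (use H other i in auto)
      qed
    qed
    also have "\<dots> \<longleftrightarrow> cond n x t" unfolding rx lo_def hi_def cond_def by simp
    finally show ?thesis .
  qed
  have cond_ex: "\<exists>n. cond n x t" if xt: "(x, t) \<in> dom_space X p" for x t
  proof -
    have xM: "x \<in> M" and tI: "t \<in> Ipow p" using dom_facts[OF xt] by auto
    have tp: "0 < t (p - 1) \<and> t (p - 1) \<le> 1" using Ipow_mem[OF tI] p by simp
    obtain V n0 where V: "x \<in> V" "\<forall>m\<ge>n0. \<forall>y'\<in>V. \<mu> m y' = 0" using B6[OF xM] by blast
    have P: "\<mu> n0 x < t (p - 1)" using V tp by simp
    define m0 where "m0 = (LEAST m. \<mu> m x < t (p - 1))"
    have m0: "\<mu> m0 x < t (p - 1)" unfolding m0_def by (rule LeastI[where P="\<lambda>m. \<mu> m x < t (p - 1)", OF P])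
    have m0ne: "m0 \<noteq> 0"
    proof
      assume "m0 = 0"
      then have "\<mu> 0 x < t (p - 1)" using m0 by simp
      then show False using B4[OF xM] tp by simp
    qed
    have "\<not> \<mu> (m0 - 1) x < t (p - 1)" unfolding m0_def
      by (rule not_less_Least) (use m0ne m0_def in simp)
    then have "cond (m0 - 1) x t" unfolding cond_def using m0 m0ne by simp
    then show ?thesis by blast
  qed
  have cond_uniq: "n = m" if "cond n x t" "cond m x t" for n m x t
  proof (rule ccontr)
    assume "n \<noteq> m"
    then consider "n < m" | "m < n" by linarith
    then show False
    proof cases
      case 1
      then have "\<mu> m x \<le> \<mu> (Suc n) x" using \<mu>anti by simp
      then show False using that unfolding cond_def by linarith
    next
      case 2
      then have "\<mu> n x \<le> \<mu> (Suc m) x" using \<mu>anti by simp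
      then show False using that unfolding cond_def by linarith
    qed
  qed
  define sidx where "sidx z = (SOME n. cond n (fst z) (snd z))" for z
  have sidx: "cond (sidx z) (fst z) (snd z)" if "z \<in> dom_space X p" for z
  proof -
    obtain x t where z: "z = (x, t)" by fastforce
    have "\<exists>n. cond n x t" using cond_ex[of x t] that z by simp
    from someI_ex[OF this] show ?thesis unfolding sidx_def z by simp
  qed
  define K where "K (C::((nat \<Rightarrow> 'x) \<times> (nat \<Rightarrow> real)) set) = ?Y closure_of (fst ` C)" for C
  define alpha where "alpha n y = (SOME \<alpha>. \<exists>c\<in>Cn n. idx c = \<alpha> \<and> d y c < 2 * eps n)" for n y
  define bpt where "bpt C \<alpha> = (SOME b. b \<in> Oc \<alpha> \<and> b \<in> K C)" for C \<alpha>
  define apt where "apt C \<alpha> = (SOME a. \<pi> a = g C (bpt C \<alpha>))" for C \<alpha>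
  define lift where "lift C n y = apt C (alpha n y) + s (g C y - g C (bpt C (alpha n y)))" for C n y
  define oldC where "oldC z = (SOME C. minimal_multiwedge X p Fs C \<and> z \<in> C)" for z
  define F where "F z = lift (oldC z) (sidx z) (fst z)" for z
  have alpha_eq: "alpha n y = idx c" if c: "c \<in> Cn n" "y \<in> M" "d y c < 2 * eps n" for n y c
  proof -
    have "\<exists>\<alpha>. \<exists>c\<in>Cn n. idx c = \<alpha> \<and> d y c < 2 * eps n" using c by blast
    from someI_ex[OF this] have "\<exists>c\<in>Cn n. idx c = alpha n y \<and> d y c < 2 * eps n" unfolding alpha_def .
    then obtain c' where c': "c' \<in> Cn n" "idx c' = alpha n y" "d y c' < 2 * eps n" by blast
    have cM: "c \<in> M" "c' \<in> M" using A0 c(1) c'(1) by blast+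
    have "d c c' \<le> d c y + d y c'" by (rule triangle[OF cM(1) c(2) cM(2)])
    also have "\<dots> < 5 * (1/2)^n" using c(3) c'(3) commute[of c y] eps_pos[of n] unfolding eps_def by linarith
    finally have "idx c = idx c'" by (rule A2[OF c(1) c'(1)])
    then show ?thesis using c'(2) by simp
  qed
  have lift_ok: "y \<in> Oc (alpha n y) \<and> bpt C (alpha n y) \<in> Oc (alpha n y) \<and> bpt C (alpha n y) \<in> K C \<and>
      g C y - g C (bpt C (alpha n y)) \<in> U \<and> \<pi> (lift C n y) = g C y"
    if mC: "minimal_multiwedge X p Fs C" and yK: "y \<in> K C" and c: "c \<in> Cn n" "y \<in> M" "d y c < 2 * eps n" for C n y c
  proof -
    have ae: "alpha n y = idx c" by (rule alpha_eq[OF c])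
    have "d c y < 5 * (1/2)^n" using c(3) commute[of c y] eps_pos[of n] unfolding eps_def by linarith
    then have yO: "y \<in> Oc (alpha n y)" unfolding ae by (rule A1[OF c(1) c(2)])
    have aM: "alpha n y \<in> M" unfolding ae by (rule A4[OF c(1)])
    have "\<exists>b. b \<in> Oc (alpha n y) \<and> b \<in> K C" using yO yK by blast
    from someI_ex[OF this] have b: "bpt C (alpha n y) \<in> Oc (alpha n y)" "bpt C (alpha n y) \<in> K C"
      unfolding bpt_def by blast+
    have gU: "g C y - g C (bpt C (alpha n y)) \<in> U"
      by (rule Oc2[OF aM mC yO b(1)]) (use yK b(2) in \<open>simp_all add: K_def\<close>)
    have "\<exists>a. \<pi> a = g C (bpt C (alpha n y))" using pi_surj by blast
    from someI_ex[OF this] have pa: "\<pi> (apt C (alpha n y)) = g C (bpt C (alpha n y))" unfolding apt_def .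
    have "\<pi> (lift C n y) = \<pi> (apt C (alpha n y)) + \<pi> (s (g C y - g C (bpt C (alpha n y))))"
      unfolding lift_def using pi_hom by simp
    also have "\<dots> = g C y" using pa sec gU by simp
    finally show ?thesis using yO b gU by blast
  qed
  have oldC: "minimal_multiwedge X p Fs (oldC z) \<and> z \<in> oldC z" if "z \<in> dom_space X p" for z
  proof -
    obtain x t where z: "z = (x, t)" by fastforce
    have "\<exists>C. minimal_multiwedge X p Fs C \<and> z \<in> C" using exists_minimal[OF asc, of x t] that z by simp
    from someI_ex[OF this] show ?thesis unfolding oldC_def .
  qed
  have mw_dom: "C \<subseteq> dom_space X p" if "is_multiwedge X p Fs0 C" for Fs0 C
    using that unfolding is_multiwedge_def multiwedge_of_def by auto
  have fstK: "fst z \<in> K C" if "z \<in> C" "is_multiwedge X p Fs0 C" for z C Fs0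
  proof -
    have "fst ` C \<subseteq> topspace ?Y" using mw_dom[OF that(2)] by (auto simp: dom_space_def)
    then show ?thesis unfolding K_def using that(1) closure_of_subset by blast
  qed
  have near: "\<exists>c\<in>Cn n. d x c < eps n" if "(x, t) \<in> dom_space X p" "cond n x t" for n x t
    using B7[OF dom_facts(1)[OF that(1)]] that(2) unfolding cond_def eps_def by force
  have goal1: "\<pi> (F z) = f z" if z: "z \<in> dom_space X p" for z
  proof -
    obtain x t where zz: "z = (x, t)" by fastforce
    define C where "C = oldC z"
    have mC: "minimal_multiwedge X p Fs C" and zC: "z \<in> C" using oldC[OF z] unfolding C_def by auto
    have cn: "cond (sidx z) x t" using sidx[OF z] zz by simp
    obtain c where c: "c \<in> Cn (sidx z)" "d x c < eps (sidx z)" using near[of x t] z zz cn by blast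
    have xM: "x \<in> M" using dom_facts z zz by blast
    have xK: "x \<in> K C" using fstK[OF zC] mC zz unfolding minimal_multiwedge_def by force
    have "d x c < 2 * eps (sidx z)" using c(2) eps_pos[of "sidx z"] by linarith
    then have "\<pi> (lift C (sidx z) x) = g C x" using lift_ok[OF mC xK c(1) xM] by blast
    moreover have "f z = g C x" using gf[OF mC zC] zz by simp
    moreover have "F z = lift C (sidx z) x" unfolding F_def C_def zz by simp
    ultimately show ?thesis by simp
  qed
  have topY: "topspace (subtopology ?Y S) = S" if "S \<subseteq> M" for S
    using that topM by (simp add: topspace_subtopology Int_absorb1)
  have mball_open: "openin ?Y (mball x r)" for x r using Md(2) by simp
  have piece: "\<exists>fC. continuous_map (subtopology ?Y (?Y closure_of (fst ` C'))) euclidean fC \<and> (\<forall>w\<in>C'. F w = fC (fst w))"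
    if mC': "minimal_multiwedge X p Fs' C'" for C'
  proof -
    obtain z where zC': "z \<in> C'" using mC' unfolding minimal_multiwedge_def by blast
    have isC': "is_multiwedge X p Fs' C'" using mC' unfolding minimal_multiwedge_def by blast
    have z: "z \<in> dom_space X p" using mw_dom[OF isC'] zC' by blast
    define C where "C = oldC z"
    define n where "n = sidx z"
    have mC: "minimal_multiwedge X p Fs C" and zC: "z \<in> C" using oldC[OF z] unfolding C_def by auto
    have isC: "is_multiwedge X p Fs C" using mC unfolding minimal_multiwedge_def by blast
    have C'C: "C' \<subseteq> C" by (rule minimal_absorb[OF lc' mC' mw_lift[OF isC] zC' zC])
    have zslab: "z \<in> slab n"
      using slab_mem[of "fst z" "snd z" n] z sidx[OF z] unfolding n_def by simp
    have C'slab: "C' \<subseteq> slab n" by (rule minimal_absorb[OF lc' mC' slab_is zC' zslab])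
    have Fw: "F w = lift C n (fst w)" if w: "w \<in> C'" for w
    proof -
      have wd: "w \<in> dom_space X p" using mw_dom[OF isC'] w by blast
      have wC: "w \<in> C" using w C'C by blast
      have "oldC w = C" by (rule minimal_disjoint[OF lc conjunct1[OF oldC[OF wd]] mC conjunct2[OF oldC[OF wd]] wC])
      moreover have "sidx w = n"
      proof -
        have "cond n (fst w) (snd w)" using slab_mem[of "fst w" "snd w" n] wd subsetD[OF C'slab w] by simp
        then show ?thesis using cond_uniq sidx[OF wd] by blast
      qed
      ultimately show ?thesis unfolding F_def by simp
    qed
    define K' where "K' = ?Y closure_of (fst ` C')"
    have K'M: "K' \<subseteq> M" unfolding K'_def topM[symmetric] by (rule closure_of_subset_topspace)
    have K'K: "K' \<subseteq> K C" unfolding K'_def K_def by (intro closure_of_mono) (use C'C in blast)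
    have R: "\<exists>c\<in>Cn n. d y c < 2 * eps n" if y: "y \<in> K'" for y
    proof -
      have yM: "y \<in> M" using y K'M by blast
      have "y \<in> mball y (eps n)" using yM eps_pos by simp
      then obtain y1 where y1: "y1 \<in> fst ` C'" "y1 \<in> mball y (eps n)"
        using y mball_open unfolding K'_def in_closure_of by blast
      then obtain w where w: "w \<in> C'" "y1 = fst w" by blast
      have wd: "w \<in> dom_space X p" using mw_dom[OF isC'] w(1) by blast
      have "cond n (fst w) (snd w)" using slab_mem[of "fst w" "snd w" n] wd subsetD[OF C'slab w(1)] by simp
      then obtain c where c: "c \<in> Cn n" "d y1 c < eps n" using near[of "fst w" "snd w" n] wd w(2) by auto
      have y1M: "y1 \<in> M" using y1(2) by simp
      have cM: "c \<in> M" using A0 c(1) by blast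
      have "d y c \<le> d y y1 + d y1 c" by (rule triangle[OF yM y1M cM])
      also have "\<dots> < 2 * eps n" using y1(2) c(2) by simp
      finally show ?thesis using c(1) by blast
    qed
    have same_alpha: "alpha n y = alpha n j" if j: "j \<in> K'" and y: "y \<in> K'" "d j y < eps n / 2" for j y
    proof -
      obtain cj where cj: "cj \<in> Cn n" "d j cj < 2 * eps n" using R[OF j] by blast
      obtain cy where cy: "cy \<in> Cn n" "d y cy < 2 * eps n" using R[OF y(1)] by blast
      have jM: "j \<in> M" and yM: "y \<in> M" using j y K'M by blast+
      have cM: "cj \<in> M" "cy \<in> M" using A0 cj(1) cy(1) by blast+
      have "d cj cy \<le> d cj j + d j cy" by (rule triangle[OF cM(1) jM cM(2)])
      also have "\<dots> \<le> d cj j + (d j y + d y cy)" using triangle[OF jM yM cM(2)] by simp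
      also have "\<dots> < 5 * (1/2)^n" using cj(2) cy(2) y(2) commute[of cj j] eps_pos[of n] unfolding eps_def by linarith
      finally have "idx cj = idx cy" by (rule A2[OF cj(1) cy(1)])
      then show ?thesis using alpha_eq[OF cj(1) jM cj(2)] alpha_eq[OF cy(1) yM cy(2)] by simp
    qed
    define T where "T j = K' \<inter> mball j (eps n / 2)" for j
    define fj where "fj j y = apt C (alpha n j) + s (g C y - g C (bpt C (alpha n j)))" for j y
    have cont_lift: "continuous_map (subtopology ?Y K') euclidean (lift C n)"
    proof (rule pasting_lemma[where I=K' and T=T and f=fj])
      show "openin (subtopology ?Y K') (T i)" if "i \<in> K'" for i
        unfolding T_def by (rule openin_subtopology_Int2[OF mball_open])
      show "continuous_map (subtopology (subtopology ?Y K') (T i)) euclidean (fj i)" if i: "i \<in> K'" for i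
      proof -
        have TK: "K' \<inter> T i = T i" unfolding T_def by blast
        have sub: "T i \<subseteq> K C" using K'K unfolding T_def by blast
        have gT: "continuous_map (subtopology ?Y (T i)) euclidean (g C)"
          using continuous_map_from_subtopology_mono[OF gcont[OF mC] sub[unfolded K_def]] .
        have g2: "continuous_map (subtopology ?Y (T i)) euclidean (\<lambda>y. g C y - g C (bpt C (alpha n i)))"
          by (rule cont_diff_const[OF gT])
        have inU: "g C y - g C (bpt C (alpha n i)) \<in> U" if y: "y \<in> topspace (subtopology ?Y (T i))" for y
        proof -
          have yT: "y \<in> T i" using y topY[of "T i"] K'M unfolding T_def by auto
          have yK': "y \<in> K'" and dy: "d i y < eps n / 2" using yT unfolding T_def by auto
          obtain cy where cy: "cy \<in> Cn n" "d y cy < 2 * eps n" using R[OF yK'] by blast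
          have yM: "y \<in> M" using yK' K'M by blast
          have "g C y - g C (bpt C (alpha n y)) \<in> U"
            using lift_ok[OF mC _ cy(1) yM cy(2)] K'K yK' by blast
          then show ?thesis using same_alpha[OF i yK' dy] by simp
        qed
        have g3: "continuous_map (subtopology ?Y (T i)) (subtopology euclidean U) (\<lambda>y. g C y - g C (bpt C (alpha n i)))"
          using g2 inU by (simp add: continuous_map_in_subtopology image_subset_iff)
        have sU: "continuous_map (subtopology euclidean U) euclidean s" using scont by simp
        have "continuous_map (subtopology ?Y (T i)) euclidean (s \<circ> (\<lambda>y. g C y - g C (bpt C (alpha n i))))"
          by (rule continuous_map_compose[OF g3 sU])
        then have "continuous_map (subtopology ?Y (T i)) euclidean (\<lambda>y. apt C (alpha n i) + (s \<circ> (\<lambda>y. g C y - g C (bpt C (alpha n i)))) y)"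
          by (rule cont_add_const)
        then show ?thesis unfolding subtopology_subtopology TK fj_def by (simp add: o_def)
      qed
      show "fj i x = fj j x" if "i \<in> K'" "j \<in> K'" "x \<in> topspace (subtopology ?Y K') \<inter> T i \<inter> T j" for i j x
      proof -
        have x: "x \<in> K'" "d i x < eps n / 2" "d j x < eps n / 2" using that(3) unfolding T_def by auto
        have "alpha n x = alpha n i" by (rule same_alpha[OF that(1) x(1) x(2)])
        moreover have "alpha n x = alpha n j" by (rule same_alpha[OF that(2) x(1) x(3)])
        ultimately show ?thesis unfolding fj_def by simp
      qed
      show "\<exists>j. j \<in> K' \<and> x \<in> T j \<and> lift C n x = fj j x" if x: "x \<in> topspace (subtopology ?Y K')" for x
      proof -
        have xK': "x \<in> K'" using x topY[OF K'M] by simp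
        have xM: "x \<in> M" using xK' K'M by blast
        have "x \<in> T x" unfolding T_def using xK' xM eps_pos[of n] by simp
        moreover have "lift C n x = fj x x" unfolding lift_def fj_def by simp
        ultimately show ?thesis using xK' by blast
      qed
    qed
    show ?thesis
      by (rule exI[of _ "lift C n"]) (use cont_lift Fw in \<open>auto simp: K'_def\<close>)
  qed
  have "semi_controls X p Fs' F"
    unfolding semi_controls_def using asc' piece by blast
  then have "semi_layered X p F" unfolding semi_layered_def by blast
  then show ?thesis using goal1 by blast
qed

theorem proposition5p5:
  fixes X :: "nat \<Rightarrow> 'x topology" and p :: nat
    and \<iota> :: "'b::{ab_group_add, topological_group_add, t2_space} \<Rightarrow> 'a::{ab_group_add, topological_group_add, t2_space}"
    and \<pi> :: "'a \<Rightarrow> 'q::{ab_group_add, topological_group_add, t2_space}"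
    and f :: "(nat \<Rightarrow> 'x) \<times> (nat \<Rightarrow> real) \<Rightarrow> 'q"
  assumes metr: "\<forall>i<p. metrizable_space (X i)"
    and iota_hom: "\<forall>u v. \<iota> (u + v) = \<iota> u + \<iota> v"
    and iota_emb: "embedding_map euclidean euclidean \<iota>"
    and pi_hom: "\<forall>u v. \<pi> (u + v) = \<pi> u + \<pi> v"
    and pi_quot: "quotient_map euclidean euclidean \<pi>"
    and exact: "range \<iota> = {a. \<pi> a = 0}"
    and loc_sect: "\<exists>U s. open U \<and> (0::'q) \<in> U \<and> continuous_on U s \<and> (\<forall>y\<in>U. \<pi> (s y) = y)"
    and f_sl: "semi_layered X p f"
  shows "\<exists>F :: (nat \<Rightarrow> 'x) \<times> (nat \<Rightarrow> real) \<Rightarrow> 'a.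
           semi_layered X p F \<and> (\<forall>z\<in>dom_space X p. \<pi> (F z) = f z)"
proof -
  have surj: "\<forall>q. \<exists>a. \<pi> a = q"
  proof
    fix q
    have "\<pi> ` topspace euclidean = topspace euclidean" using pi_quot unfolding quotient_map_def by blast
    then have "q \<in> range \<pi>" by simp
    then show "\<exists>a. \<pi> a = q" by blast
  qed
  obtain Fs where ctrl: "semi_controls X p Fs f" using f_sl unfolding semi_layered_def by blast
  obtain U s where Us: "open U" "(0::'q) \<in> U" "continuous_on U s" "\<forall>y\<in>U. \<pi> (s y) = y"
    using loc_sect by blast
  show ?thesis
  proof (cases "p = 0")
    case False
    then have "0 < p" by simp
    then show ?thesis using main_pos[OF _ metr pi_hom surj Us ctrl] by blast
  next
    case True
    define F where "F z = (SOME a. \<pi> a = f z)" for z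
    have Fok: "\<pi> (F z) = f z" for z
    proof -
      have "\<exists>a. \<pi> a = f z" using surj by blast
      from someI_ex[OF this] show ?thesis unfolding F_def .
    qed
    have asc: "ascending_lcomplete X p Fs" using ctrl unfolding semi_controls_def by blast
    have "semi_controls X p Fs F"
      unfolding semi_controls_def
    proof (intro conjI allI impI)
      show "ascending_lcomplete X p Fs" by (rule asc)
      fix C assume mC: "minimal_multiwedge X p Fs C"
      have top0: "topspace (Xle X p) = {\<lambda>_. undefined}" using True by (simp add: topspace_Xle)
      have I0: "Ipow p = {\<lambda>_. undefined}" using True by (simp add: Ipow_def)
      have Cd: "C \<subseteq> dom_space X p" using mC unfolding minimal_multiwedge_def is_multiwedge_def multiwedge_of_def by auto
      let ?c = "F (\<lambda>_. undefined, \<lambda>_. undefined)"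
      show "\<exists>fC. continuous_map (subtopology (Xle X p) (Xle X p closure_of (fst ` C))) euclidean fC \<and> (\<forall>z\<in>C. F z = fC (fst z))"
      proof (intro exI conjI ballI)
        show "continuous_map (subtopology (Xle X p) (Xle X p closure_of (fst ` C))) euclidean (\<lambda>_. ?c)" by simp
        fix z assume "z \<in> C"
        then have "z \<in> dom_space X p" using Cd by blast
        then have "z = (\<lambda>_. undefined, \<lambda>_. undefined)" using top0 I0 by (auto simp: dom_space_def)
        then show "F z = ?c" by simp
      qed
    qed
    then have "semi_layered X p F" unfolding semi_layered_def by blast
    then show ?thesis using Fok by blast
  qed
qed

end
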